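(* Assume that for some constants $0<a<b$, for all agents $i$, all $t\ge t_0$ and all $k\in\{1,\dots,K\}$, the iterates satisfy $aI_p\preceq\Gamma_{i,t}^k\preceq bI_p$, that $aI_p\preceq\Gamma^*\preceq bI_p$, and that a constant step size $\zeta_{i,t}^k=\zeta>0$ is used. Then after $W$ communication rounds and $K$ optimization iterations at time step $t\ge t_0$, $$\|\Gamma_{i,t}^K-\Gamma^*\|_F\le\beta^{K(t-t_0)}\|\Gamma_{i,t_0}^K-\Gamma^*\|_F+2\sum_{m=1}^K\beta^{K-m}\sum_{l=t_0+1}^t\beta^{K(t-l)}\|S_{i,l}^W-S^*\|_F,$$ where $\beta=\max\{|1-\zeta/a^2|,|1-\zeta/b^2|\}$.
   Context: Let $S^*\in\mathbb R^{p\times p}$ be positive definite and $X_1,X_2,\dots$ i.i.d. samples of $\mathcal N(0,S^* )$, $X_t=(x_{1t},\dots,x_{pt})^T$. There are $n$ agents, the vertices of a connected undirected unweighted graph $\mathcal G_a$; $N_i$ = neighbors of $i$, $\mathcal N_i=N_i\cup\{i\}$. Each agent directly measures some of the variables $x_1,\dots,x_p$; $x_j$ is observable by $i$ if measured by $i$ or a neighbor of $i$; $V_i$ is the diagonal $0/1$ matrix with $V_i(j,j)=1$ iff $x_j$ is observable by $i$. Communication protocol ($W$ rounds per time step): $S_{i,0}^W=0$; at time $t\ge1$, $\chi_{i,t}(j)=x_{jt}$ if $x_j$ observable by $i$, else $0$; with $\Sigma=\sum_{j\in\mathcal N_i}S_{j,t-1}^W$, $S_{i,t}^1=\frac1t((t-1)V_iS_{i,t-1}^WV_i+\chi_{i,t}\chi_{i,t}^T)+\frac1{|\mathcal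 N_i|}(\Sigma-V_i\Sigma V_i)$; for $2\le w\le W$, with $\Sigma_w=\sum_{j\in\mathcal N_i}S_{j,t}^{w-1}$, $S_{i,t}^w=V_iS_{i,t}^{w-1}V_i+\frac1{|\mathcal N_i|}(\Sigma_w-V_i\Sigma_wV_i)$. Optimization: given $\lambda>0$, $t_0,K\in\mathbb N$, and $\mathcal C_\lambda(x)=\min(\max(x,-\lambda),\lambda)$ entrywise: $\Gamma_{i,t_0}^K=S_{i,t_0}^W+\lambda I_p$; for $t>t_0$, $\Gamma_{i,t}^0=\Gamma_{i,t-1}^K$ and for $k=1,\dots,K$, $\Gamma_{i,t}^k=\mathcal C_\lambda(\Gamma_{i,t}^{k-1}-S_{i,t}^W+\zeta_{i,t}^{k-1}(\Gamma_{i,t}^{k-1})^{-1})+S_{i,t}^W$. Let $\Omega^*$ minimize $-\log\det\Omega+\mathrm{tr}(S^*\Omega)+\lambda\sum_{i,j}|\Omega(i,j)|$ over positive definite $\Omega$, and $\Gamma^*=(\Omega^* )^{-1}$. $\|\cdot\|_F$ is the Frobenius norm. *)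

theory Defs
  imports "HOL-Analysis.Analysis" "HOL-Probability.Probability"
begin

type_synonym 'p mat = "real^'p^'p"

definition sym_mat :: "'p::finite mat \<Rightarrow> bool" where
  "sym_mat A \<longleftrightarrow> transpose A = A"

definition pos_def :: "'p::finite mat \<Rightarrow> bool" where
  "pos_def A \<longleftrightarrow> sym_mat A \<and> (\<forall>x. x \<noteq> 0 \<longrightarrow> 0 < x \<bullet> (A *v x))"

definition pos_semidef :: "'p::finite mat \<Rightarrow> bool" where
  "pos_semidef A \<longleftrightarrow> sym_mat A \<and> (\<forall>x. 0 \<le> x \<bullet> (A *v x))"

definition loewner_le :: "'p::finite mat \<Rightarrow> 'p mat \<Rightarrow> bool" where
  "loewner_le A B \<longleftrightarrow> pos_semidef (B - A)"

definition frob_norm :: "'p::finite mat \<Rightarrow> real" where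
  "frob_norm A = sqrt (\<Sum>i\<in>UNIV. \<Sum>j\<in>UNIV. (A $ i $ j)^2)"

definition clip :: "real \<Rightarrow> 'p::finite mat \<Rightarrow> 'p mat" where
  "clip lam A = (\<chi> i j. min (max (A $ i $ j) (- lam)) lam)"

definition outer :: "real^'p \<Rightarrow> real^'p \<Rightarrow> 'p::finite mat" where
  "outer x y = (\<chi> i j. x $ i * y $ j)"

definition glasso_obj :: "'p::finite mat \<Rightarrow> real \<Rightarrow> 'p mat \<Rightarrow> real" where
  "glasso_obj S lam \<Omega> =
     - ln (det \<Omega>) + trace (S ** \<Omega>) + lam * (\<Sum>i\<in>UNIV. \<Sum>j\<in>UNIV. \<bar>\<Omega> $ i $ j\<bar>)"

definition gauss_density :: "'p::finite mat \<Rightarrow> real^'p \<Rightarrow> real" where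
  "gauss_density S x =
     (2 * pi) powr (- real CARD('p) / 2) * det S powr (-1/2)
       * exp (- (x \<bullet> (matrix_inv S *v x)) / 2)"

text \<open>Agents are the elements of a finite type 'n; adj is the edge relation of
  a connected undirected unweighted (simple) graph.\<close>
definition conn_undirected_graph :: "('n::finite \<Rightarrow> 'n \<Rightarrow> bool) \<Rightarrow> bool" where
  "conn_undirected_graph adj \<longleftrightarrow>
     (\<forall>i j. adj i j \<longrightarrow> adj j i) \<and> (\<forall>i. \<not> adj i i) \<and> (\<forall>i j. adj\<^sup>*\<^sup>* i j)"

definition cnbhd :: "('n \<Rightarrow> 'n \<Rightarrow> bool) \<Rightarrow> 'n \<Rightarrow> 'n set" where
  "cnbhd adj i = {j. adj i j} \<union> {i}"

text \<open>meas k j: agent k directly measures variable x_j.\<close>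
definition observable :: "('n \<Rightarrow> 'n \<Rightarrow> bool) \<Rightarrow> ('n \<Rightarrow> 'p \<Rightarrow> bool) \<Rightarrow> 'n \<Rightarrow> 'p \<Rightarrow> bool" where
  "observable adj meas i j \<longleftrightarrow> (\<exists>k\<in>cnbhd adj i. meas k j)"

definition Vmat :: "('n \<Rightarrow> 'n \<Rightarrow> bool) \<Rightarrow> ('n \<Rightarrow> 'p \<Rightarrow> bool) \<Rightarrow> 'n \<Rightarrow> 'p::finite mat" where
  "Vmat adj meas i = (\<chi> r c. if r = c \<and> observable adj meas i r then 1 else 0)"

definition chi_obs :: "('n \<Rightarrow> 'n \<Rightarrow> bool) \<Rightarrow> ('n \<Rightarrow> 'p \<Rightarrow> bool) \<Rightarrow> 'n \<Rightarrow> real^'p \<Rightarrow> real^'p::finite" where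
  "chi_obs adj meas i x = (\<chi> j. if observable adj meas i j then x $ j else 0)"

text \<open>First round at time t (t \<ge> 1), using the previous final matrices Sprev = S^W_{.,t-1}
  and the sample x = X_t.\<close>
definition comm_first ::
  "('n::finite \<Rightarrow> 'n \<Rightarrow> bool) \<Rightarrow> ('n \<Rightarrow> 'p \<Rightarrow> bool) \<Rightarrow> nat \<Rightarrow> real^'p \<Rightarrow> ('n \<Rightarrow> 'p::finite mat) \<Rightarrow> 'n \<Rightarrow> 'p mat" where
  "comm_first adj meas t x Sprev i =
     (let V = Vmat adj meas i; \<Sigma> = (\<Sum>j\<in>cnbhd adj i. Sprev j); c = chi_obs adj meas i x in
      (1 / real t) *\<^sub>R ((real t - 1) *\<^sub>R (V ** Sprev i ** V) + outer c c)
      + (1 / real (card (cnbhd adj i))) *\<^sub>R (\<Sigma> - V ** \<Sigma> ** V))"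

definition comm_round ::
  "('n::finite \<Rightarrow> 'n \<Rightarrow> bool) \<Rightarrow> ('n \<Rightarrow> 'p \<Rightarrow> bool) \<Rightarrow> ('n \<Rightarrow> 'p::finite mat) \<Rightarrow> 'n \<Rightarrow> 'p mat" where
  "comm_round adj meas Scur i =
     (let V = Vmat adj meas i; \<Sigma> = (\<Sum>j\<in>cnbhd adj i. Scur j) in
      V ** Scur i ** V + (1 / real (card (cnbhd adj i))) *\<^sub>R (\<Sigma> - V ** \<Sigma> ** V))"

text \<open>SW adj meas W X t i = S^W_{i,t}, where X t is the sample at time t (t \<ge> 1).\<close>
primrec SW ::
  "('n::finite \<Rightarrow> 'n \<Rightarrow> bool) \<Rightarrow> ('n \<Rightarrow> 'p \<Rightarrow> bool) \<Rightarrow> nat \<Rightarrow> (nat \<Rightarrow> real^'p) \<Rightarrow> nat \<Rightarrow> 'n \<Rightarrow> 'p::finite mat" where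
  "SW adj meas W X 0 = (\<lambda>i. 0)"
| "SW adj meas W X (Suc t) =
     (comm_round adj meas ^^ (W - 1)) (comm_first adj meas (Suc t) (X (Suc t)) (SW adj meas W X t))"

definition opt_step :: "real \<Rightarrow> real \<Rightarrow> 'p::finite mat \<Rightarrow> 'p mat \<Rightarrow> 'p mat" where
  "opt_step lam zeta S G = clip lam (G - S + zeta *\<^sub>R matrix_inv G) + S"

text \<open>GamK d = \<Gamma>^K_{i,t0+d}, for a fixed agent i, given the local sequence Sl t = S^W_{i,t}.\<close>
primrec GamK :: "real \<Rightarrow> real \<Rightarrow> nat \<Rightarrow> nat \<Rightarrow> (nat \<Rightarrow> 'p::finite mat) \<Rightarrow> nat \<Rightarrow> 'p mat" where
  "GamK lam zeta K t0 Sl 0 = Sl t0 + lam *\<^sub>R mat 1"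
| "GamK lam zeta K t0 Sl (Suc d) = (opt_step lam zeta (Sl (t0 + Suc d)) ^^ K) (GamK lam zeta K t0 Sl d)"

text \<open>Gam ... t k = \<Gamma>^k_{i,t} for t > t0 (and \<Gamma>^K_{i,t0} for t \<le> t0).\<close>
definition Gam :: "real \<Rightarrow> real \<Rightarrow> nat \<Rightarrow> nat \<Rightarrow> (nat \<Rightarrow> 'p::finite mat) \<Rightarrow> nat \<Rightarrow> nat \<Rightarrow> 'p mat" where
  "Gam lam zeta K t0 Sl t k =
     (if t \<le> t0 then GamK lam zeta K t0 Sl 0
      else (opt_step lam zeta (Sl t) ^^ k) (GamK lam zeta K t0 Sl (t - t0 - 1)))"

end

theory Submission
  imports Defs
begin

lemma mm_comp: "((A::real^'n^'m) ** B) $ i $ j = (\<Sum>k\<in>UNIV. A$i$k * B$k$j)"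
  by (simp add: matrix_matrix_mult_def)

lemma mv_comp: "((A::real^'n^'m) *v x) $ i = (\<Sum>k\<in>UNIV. A$i$k * x$k)"
  by (simp add: matrix_vector_mult_def)

lemma mat_sub_ldistrib: "(A::real^'n^'m) ** (B - C) = A ** B - A ** C"
  by (simp add: vec_eq_iff matrix_matrix_mult_def algebra_simps sum_subtractf)

lemma mat_add_rdistrib: "((A::real^'n^'m) + B) ** C = A ** C + B ** C"
  by (simp add: vec_eq_iff matrix_matrix_mult_def algebra_simps sum.distrib)

lemma mat_sub_rdistrib: "((A::real^'n^'m) - B) ** C = A ** C - B ** C"
  by (simp add: vec_eq_iff matrix_matrix_mult_def algebra_simps sum_subtractf)

lemma mat_scale_l: "(c *\<^sub>R (A::real^'n^'m)) ** B = c *\<^sub>R (A ** B)"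
  by (simp add: vec_eq_iff matrix_matrix_mult_def sum_distrib_left algebra_simps)

lemma mat_scale_r: "(A::real^'n^'m) ** (c *\<^sub>R B) = c *\<^sub>R (A ** B)"
  by (simp add: vec_eq_iff matrix_matrix_mult_def sum_distrib_left algebra_simps)

lemma mat1_mult_l: "(mat 1 :: real^'n^'n) ** A = A" by simp
lemma mat1_mult_r: "(A :: real^'n^'m) ** mat 1 = A" by simp

lemma trace_scale: "trace (c *\<^sub>R (A::real^'n^'n)) = c * trace A"
  by (simp add: trace_def sum_distrib_left)

lemma trace_diff: "trace ((A::real^'n^'n) - B) = trace A - trace B"
  by (simp add: trace_def sum_subtractf)

lemma inner_mat: "(A::real^'n^'m) \<bullet> B = (\<Sum>i\<in>UNIV. \<Sum>j\<in>UNIV. A$i$j * B$i$j)"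
  by (simp add: inner_vec_def)

lemma inner_trace: "(A::real^'n^'m) \<bullet> B = trace (transpose A ** B)"
  unfolding inner_mat trace_def mm_comp
  by (simp add: transpose_def) (rule sum.swap)

lemma frob_norm_eq: "frob_norm (A::real^'n^'n) = norm A"
proof -
  have "norm A = sqrt (\<Sum>i\<in>UNIV. (norm (A$i))\<^sup>2)" by (simp add: norm_vec_def L2_set_def)
  also have "\<dots> = sqrt (\<Sum>i\<in>UNIV. \<Sum>j\<in>UNIV. (A$i$j)\<^sup>2)"
    by (simp add: norm_vec_def L2_set_def sum_nonneg)
  finally show ?thesis unfolding frob_norm_def by simp
qed

lemma quad_sym_transpose: "sym_mat A \<Longrightarrow> transpose A = (A::real^'n^'n)"
  by (simp add: sym_mat_def)

lemma sym_entry: "sym_mat A \<Longrightarrow> (A::real^'n^'n) $ i $ j = A $ j $ i"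
  unfolding sym_mat_def by (metis transpose_def vec_lambda_beta)

lemma matrix_inv_props:
  assumes "invertible (A::real^'n^'n)"
  shows "A ** matrix_inv A = mat 1" "matrix_inv A ** A = mat 1"
proof -
  from assms obtain B where "A ** B = mat 1 \<and> B ** A = mat 1" unfolding invertible_def by blast
  then have "A ** matrix_inv A = mat 1 \<and> matrix_inv A ** A = mat 1"
    unfolding matrix_inv_def by (rule someI)
  then show "A ** matrix_inv A = mat 1" "matrix_inv A ** A = mat 1" by auto
qed

lemma matrix_inv_unique:
  assumes "(A::real^'n^'n) ** B = mat 1"
  shows "matrix_inv A = B"
proof -
  have inv: "invertible A" using assms invertible_right_inverse by blast
  have "matrix_inv A = matrix_inv A ** (A ** B)" using assms by simp
  also have "\<dots> = (matrix_inv A ** A) ** B" by (simp add: matrix_mul_assoc)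
  also have "\<dots> = B" using matrix_inv_props[OF inv] by simp
  finally show ?thesis .
qed

lemma matrix_inv_sym:
  assumes "invertible (A::real^'n^'n)" "sym_mat A"
  shows "sym_mat (matrix_inv A)"
proof -
  have "transpose (matrix_inv A ** A) = mat 1" using matrix_inv_props[OF assms(1)] by simp
  then have "A ** transpose (matrix_inv A) = mat 1"
    using assms(2) by (simp add: matrix_transpose_mul sym_mat_def)
  then have "matrix_inv A = transpose (matrix_inv A)" using matrix_inv_unique by metis
  then show ?thesis by (simp add: sym_mat_def)
qed

lemma matrix_inv_inv:
  assumes "invertible (A::real^'n^'n)"
  shows "matrix_inv (matrix_inv A) = A"
  using matrix_inv_props[OF assms] matrix_inv_unique by blast

lemma outer_mv: "outer u w *v x = (w \<bullet> x) *\<^sub>R (u::real^'n)"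
  by (simp add: vec_eq_iff outer_def matrix_vector_mult_def inner_vec_def sum_distrib_left algebra_simps)

lemma quad_entries: "x \<bullet> ((A::real^'n^'n) *v x) = (\<Sum>i\<in>UNIV. \<Sum>j\<in>UNIV. x$i * A$i$j * x$j)"
  by (simp add: inner_vec_def matrix_vector_mult_def sum_distrib_left algebra_simps)


lemma transpose_diff: "transpose ((A::real^'n^'m) - B) = transpose A - transpose B"
  by (simp add: vec_eq_iff transpose_def)

lemma transpose_add: "transpose ((A::real^'n^'m) + B) = transpose A + transpose B"
  by (simp add: vec_eq_iff transpose_def)

lemma mat_scale1: "((a *\<^sub>R mat 1) :: real^'n^'n) = mat a" by (simp add: vec_eq_iff mat_def)
lemma mv_mat: "(mat a :: real^'n^'n) *v x = a *\<^sub>R x"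
proof -
    have "(\<Sum>j\<in>UNIV. (if i = j then a else 0) * x $ j) = a * x $ i" for i
    proof -
      have "(\<Sum>j\<in>UNIV. (if i = j then a else 0) * x $ j) = (\<Sum>j\<in>UNIV. if i = j then a * x $ j else 0)"
        by (rule sum.cong) auto
      then show ?thesis by simp
    qed
    then show ?thesis by (simp add: vec_eq_iff matrix_vector_mult_def mat_def)
qed
lemma mv_scale_mat1: "((a *\<^sub>R mat 1) :: real^'n^'n) *v x = a *\<^sub>R x"
  by (simp add: mat_scale1 mv_mat)

lemma mv_sub_mat1: "((X::real^'n^'n) - a *\<^sub>R mat 1) *v x = X *v x - a *\<^sub>R x"
  by (simp add: matrix_vector_mult_diff_rdistrib mv_scale_mat1)

lemma mv_mat1_sub: "(b *\<^sub>R mat 1 - (X::real^'n^'n)) *v x = b *\<^sub>R x - X *v x"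
  by (simp add: matrix_vector_mult_diff_rdistrib mv_scale_mat1)

lemma sym_sub_mat1: "sym_mat ((X::real^'n^'n) - a *\<^sub>R mat 1) \<longleftrightarrow> sym_mat X"
  unfolding sym_mat_def transpose_diff transpose_scalar transpose_mat by auto

lemma sym_mat1_sub: "sym_mat (b *\<^sub>R mat 1 - (X::real^'n^'n)) \<longleftrightarrow> sym_mat X"
  unfolding sym_mat_def transpose_diff transpose_scalar transpose_mat
  by (metis minus_diff_eq  diff_add_cancel)

lemma loewner_lo:
  "loewner_le (a *\<^sub>R mat 1) (X::real^'n^'n) \<longleftrightarrow> sym_mat X \<and> (\<forall>x. a * (norm x)\<^sup>2 \<le> x \<bullet> (X *v x))"
  unfolding loewner_le_def pos_semidef_def sym_sub_mat1 mv_sub_mat1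
  by (simp add: inner_diff_right power2_norm_eq_inner)

lemma loewner_hi:
  "loewner_le (X::real^'n^'n) (b *\<^sub>R mat 1) \<longleftrightarrow> sym_mat X \<and> (\<forall>x. x \<bullet> (X *v x) \<le> b * (norm x)\<^sup>2)"
  unfolding loewner_le_def pos_semidef_def sym_mat1_sub mv_mat1_sub
  by (simp add: inner_diff_right power2_norm_eq_inner)

definition bnd :: "real \<Rightarrow> real \<Rightarrow> real^'n^'n \<Rightarrow> bool" where
  "bnd a b X \<longleftrightarrow> sym_mat X \<and> (\<forall>x. a * (norm x)\<^sup>2 \<le> x \<bullet> (X *v x) \<and> x \<bullet> (X *v x) \<le> b * (norm x)\<^sup>2)"

lemma bnd_loewner: "loewner_le (a *\<^sub>R mat 1) X \<and> loewner_le X (b *\<^sub>R mat 1) \<longleftrightarrow> bnd a b X"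
  unfolding loewner_lo loewner_hi bnd_def by auto

lemma bnd_invertible:
  assumes "bnd a b (X::real^'n^'n)" "a > 0"
  shows "invertible X"
proof -
  have "\<forall>x. X *v x = 0 \<longrightarrow> x = 0"
  proof (intro allI impI)
    fix x assume "X *v x = 0"
    then have "a * (norm x)\<^sup>2 \<le> 0" using assms(1) unfolding bnd_def by (metis inner_zero_right)
    then show "x = 0" using assms(2) by (simp add: mult_le_0_iff)
  qed
  then show ?thesis using matrix_left_invertible_ker invertible_left_inverse by blast
qed

lemma selfadj_norm:
  fixes T :: "'a::real_inner \<Rightarrow> 'a"
  assumes lin: "linear T" and sa: "\<And>x y. T x \<bullet> y = x \<bullet> T y"
    and rng: "\<And>x. \<bar>x \<bullet> T x\<bar> \<le> \<rho> * (norm x)\<^sup>2"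
  shows "norm (T x) \<le> \<rho> * norm x"
proof (cases "T x = 0")
  case True
  show ?thesis
  proof (cases "x = 0")
    case True
    then show ?thesis using \<open>T x = 0\<close> by simp
  next
    case False
    have "0 \<le> \<rho> * (norm x)\<^sup>2" using rng[of x] abs_ge_zero order_trans by blast
    then have "0 \<le> \<rho>" using False by (simp add: zero_le_mult_iff)
    then show ?thesis using \<open>T x = 0\<close> by simp
  qed
next
  case False
  have key: "4 * (T u \<bullet> v) \<le> 2 * \<rho> * ((norm u)\<^sup>2 + (norm v)\<^sup>2)" for u v
  proof -
    have e1: "(u + v) \<bullet> T (u + v) = u \<bullet> T u + 2 * (T u \<bullet> v) + v \<bullet> T v"
      using sa[of u v] sa[of v u] linear_add[OF lin] by (simp add: inner_add_left inner_add_right inner_commute)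
    have e2: "(u - v) \<bullet> T (u - v) = u \<bullet> T u - 2 * (T u \<bullet> v) + v \<bullet> T v"
      using sa[of u v] sa[of v u] linear_diff[OF lin] by (simp add: inner_diff_left inner_diff_right inner_commute)
    have p: "(norm (u + v))\<^sup>2 + (norm (u - v))\<^sup>2 = 2 * ((norm u)\<^sup>2 + (norm v)\<^sup>2)"
      by (simp add: power2_norm_eq_inner inner_add_left inner_add_right inner_diff_left inner_diff_right inner_commute)
    have "4 * (T u \<bullet> v) = (u + v) \<bullet> T (u + v) - (u - v) \<bullet> T (u - v)" using e1 e2 by simp
    also have "\<dots> \<le> \<rho> * (norm (u + v))\<^sup>2 + \<rho> * (norm (u - v))\<^sup>2"
      using rng[of "u+v"] rng[of "u-v"] by linarith
    also have "\<dots> = 2 * \<rho> * ((norm u)\<^sup>2 + (norm v)\<^sup>2)" by (simp only: distrib_left[symmetric] p)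
    finally show ?thesis .
  qed
  define c where "c = norm x / norm (T x)"
  have tpos: "norm (T x) > 0" using False by simp
  have "4 * (T x \<bullet> (c *\<^sub>R T x)) \<le> 2 * \<rho> * ((norm x)\<^sup>2 + (norm (c *\<^sub>R T x))\<^sup>2)" by (rule key)
  moreover have "T x \<bullet> (c *\<^sub>R T x) = norm x * norm (T x)"
    using tpos by (simp add: c_def power2_norm_eq_inner[symmetric] power2_eq_square)
  moreover have "norm (c *\<^sub>R T x) = norm x"
    using tpos by (simp add: c_def)
  ultimately have "4 * (norm x * norm (T x)) \<le> 4 * \<rho> * (norm x)\<^sup>2" by simp
  then have "norm x * norm (T x) \<le> norm x * (\<rho> * norm x)" by (simp add: power2_eq_square algebra_simps)
  moreover have "norm x > 0" using False lin linear_0 by fastforce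
  ultimately show ?thesis by (simp add: mult_le_cancel_left)
qed

lemma axis_quad: "axis a 1 \<bullet> ((G::real^'n^'n) *v axis b 1) = G$a$b"
  by (simp add: matrix_vector_mult_basis inner_axis' column_def)

lemma sym_adj: "sym_mat (M::real^'n^'n) \<Longrightarrow> (M *v u) \<bullet> w = u \<bullet> (M *v w)"
  by (metis dot_lmul_matrix sym_mat_def transpose_matrix_vector)

lemma quad_two:
  fixes G :: "real^'n^'n"
  assumes "sym_mat G"
  shows "(s *\<^sub>R axis k 1 + t *\<^sub>R axis j 1) \<bullet> (G *v (s *\<^sub>R axis k 1 + t *\<^sub>R axis j 1))
     = s^2 * G$k$k + 2 * s * t * G$k$j + t^2 * G$j$j"
proof -
  have "G$j$k = G$k$j" using sym_entry[OF assms] by simp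
  then show ?thesis
    by (simp add: matrix_vector_right_distrib matrix_vector_mult_scaleR inner_add_left inner_add_right
        axis_quad power2_eq_square algebra_simps)
qed

lemma psd_diag: "sym_mat G \<Longrightarrow> (\<forall>x. 0 \<le> x \<bullet> ((G::real^'n^'n) *v x)) \<Longrightarrow> 0 \<le> G$k$k"
  using axis_quad[of k G k] by metis

lemma psd_zero_diag:
  fixes G :: "real^'n^'n"
  assumes "sym_mat G" "\<forall>x. 0 \<le> x \<bullet> (G *v x)" "G$k$k = 0"
  shows "G$k$j = 0"
proof (rule ccontr)
  assume ne: "G$k$j \<noteq> 0"
  define s where "s = - (G$j$j + 1) / (2 * G$k$j)"
  have "0 \<le> (s *\<^sub>R axis k 1 + 1 *\<^sub>R axis j 1) \<bullet> (G *v (s *\<^sub>R axis k 1 + 1 *\<^sub>R axis j 1))"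
    using assms(2) by blast
  also have "\<dots> = 2 * s * G$k$j + G$j$j" using quad_two[OF assms(1), of s k 1 j] assms(3) by simp
  also have "\<dots> = -1" using ne by (simp add: s_def field_simps)
  finally show False by simp
qed

lemma psd_gram_aux:
  assumes "finite S"
  shows "\<forall>G::real^'n^'n. sym_mat G \<and> (\<forall>x. 0 \<le> x \<bullet> (G *v x)) \<and> (\<forall>i j. G$i$j \<noteq> 0 \<longrightarrow> i \<in> S \<and> j \<in> S)
          \<longrightarrow> (\<exists>v. \<forall>i j. G$i$j = (\<Sum>k\<in>S. v k $ i * v k $ j))"
  using assms
proof (induction S rule: finite_induct)
  case empty
  then show ?case by auto
next
  case (insert k S)
  show ?case
  proof (intro allI impI)
    fix G :: "real^'n^'n"
    assume H: "sym_mat G \<and> (\<forall>x. 0 \<le> x \<bullet> (G *v x)) \<and> (\<forall>i j. G$i$j \<noteq> 0 \<longrightarrow> i \<in> insert k S \<and> j \<in> insert k S)"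
    then have sG: "sym_mat G" and pG: "\<forall>x. 0 \<le> x \<bullet> (G *v x)"
      and supp: "\<And>i j. G$i$j \<noteq> 0 \<Longrightarrow> i \<in> insert k S \<and> j \<in> insert k S" by auto
    have symG: "\<And>i j. G$i$j = G$j$i" using sym_entry[OF sG] by blast
    show "\<exists>v. \<forall>i j. G$i$j = (\<Sum>k\<in>insert k S. v k $ i * v k $ j)"
    proof (cases "G$k$k = 0")
      case True
      have z: "G$k$j = 0" for j using psd_zero_diag[OF sG pG True] .
      have "\<forall>i j. G$i$j \<noteq> 0 \<longrightarrow> i \<in> S \<and> j \<in> S"
      proof (intro allI impI)
        fix i j assume ne: "G$i$j \<noteq> 0"
        have "i \<noteq> k" using ne z by auto
        moreover have "j \<noteq> k" using ne z[of i] symG[of i k] by auto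
        ultimately show "i \<in> S \<and> j \<in> S" using supp[OF ne] by auto
      qed
      then obtain v where v: "\<forall>i j. G$i$j = (\<Sum>k\<in>S. v k $ i * v k $ j)"
        using insert.IH sG pG by blast
      define v' where "v' = v(k := 0)"
      have "(\<Sum>k\<in>insert k S. v' k $ i * v' k $ j) = (\<Sum>k\<in>S. v k $ i * v k $ j)" for i j
        using insert.hyps by (simp add: v'_def) (intro sum.cong, auto)
      then show ?thesis using v by metis
    next
      case False
      define g where "g = G$k$k"
      have gpos: "g > 0" using psd_diag[OF sG pG, of k] False by (simp add: g_def)
      define c where "c = (\<chi> i. G$i$k)"
      define G' where "G' = (\<chi> i j. G$i$j - c$i * c$j / g)"
      have G'e: "G'$i$j = G$i$j - c$i * c$j / g" for i j by (simp add: G'_def)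
      have sG': "sym_mat G'"
        unfolding sym_mat_def by (simp add: vec_eq_iff transpose_def G'e symG)
      have cx: "axis k 1 \<bullet> (G *v x) = c \<bullet> x" "x \<bullet> (G *v axis k 1) = c \<bullet> x" for x
      proof -
        show "x \<bullet> (G *v axis k 1) = c \<bullet> x"
          by (simp add: matrix_vector_mult_basis column_def c_def inner_commute)
        then show "axis k 1 \<bullet> (G *v x) = c \<bullet> x" using sym_adj[OF sG] by (metis inner_commute)
      qed
      have q': "x \<bullet> (G' *v x) = x \<bullet> (G *v x) - (c \<bullet> x)^2 / g" for x
      proof -
        have "x \<bullet> (G' *v x) = (\<Sum>i\<in>UNIV. \<Sum>j\<in>UNIV. x$i * G$i$j * x$j - (x$i * c$i) * (c$j * x$j) / g)"
          unfolding quad_entries G'e by (rule sum.cong, simp, rule sum.cong, simp, simp add: field_simps)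
        also have "\<dots> = x \<bullet> (G *v x) - (\<Sum>i\<in>UNIV. \<Sum>j\<in>UNIV. (x$i * c$i) * (c$j * x$j)) / g"
          unfolding quad_entries by (simp add: sum_subtractf sum_divide_distrib)
        also have "(\<Sum>i\<in>UNIV. \<Sum>j\<in>UNIV. (x$i * c$i) * (c$j * x$j)) = (c \<bullet> x)^2"
          by (simp add: power2_eq_square inner_vec_def sum_product algebra_simps)
        finally show ?thesis .
      qed
      have pG': "0 \<le> x \<bullet> (G' *v x)" for x
      proof -
        define t where "t = (c \<bullet> x) / g"
        define y where "y = x - t *\<^sub>R axis k 1"
        have ck0: "c \<bullet> axis k 1 = g" by (simp add: inner_axis c_def g_def)
        have "y \<bullet> (G *v y) = x \<bullet> (G *v x) - t * (axis k 1 \<bullet> (G *v x)) - t * (x \<bullet> (G *v axis k 1))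
               + t * t * (axis k 1 \<bullet> (G *v axis k 1))"
          by (simp add: y_def matrix_vector_mult_diff_distrib matrix_vector_mult_scaleR inner_diff_left
              inner_diff_right algebra_simps)
        also have "\<dots> = x \<bullet> (G *v x) - (c \<bullet> x)^2 / g"
          using gpos by (simp add: cx ck0 axis_quad t_def g_def[symmetric] power2_eq_square field_simps)
        finally show ?thesis using q' pG by metis
      qed
      have supp': "G'$i$j \<noteq> 0 \<Longrightarrow> i \<in> S \<and> j \<in> S" for i j
      proof -
        assume ne: "G'$i$j \<noteq> 0"
        have ck: "c$k = g" by (simp add: c_def g_def)
        have i1: "i \<noteq> k"
        proof
          assume ik: "i = k"
          have "G'$k$j = G$k$j - G$k$k * G$j$k / g" by (simp add: G'e c_def)
          also have "\<dots> = 0" using gpos symG[of j k] by (simp add: g_def)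
          finally have "G'$i$j = 0" using ik by simp
          then show False using ne by simp
        qed
        have j1: "j \<noteq> k"
        proof
          assume jk: "j = k"
          have "G'$i$k = G$i$k - G$i$k * G$k$k / g" by (simp add: G'e c_def)
          also have "\<dots> = 0" using gpos by (simp add: g_def)
          finally have "G'$i$j = 0" using jk by simp
          then show False using ne by simp
        qed
        have "G$i$j \<noteq> 0 \<or> c$i \<noteq> 0 \<and> c$j \<noteq> 0" using ne by (auto simp: G'e)
        moreover have "c$i \<noteq> 0 \<Longrightarrow> i \<in> insert k S" using supp[of i k] by (simp add: c_def)
        moreover have "c$j \<noteq> 0 \<Longrightarrow> j \<in> insert k S" using supp[of j k] by (simp add: c_def)
        ultimately have "i \<in> insert k S \<and> j \<in> insert k S"
          using supp[of i j] by blast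
        then show ?thesis using i1 j1 by auto
      qed
      obtain v where v: "\<forall>i j. G'$i$j = (\<Sum>k\<in>S. v k $ i * v k $ j)"
        using insert.IH sG' pG' supp' by blast
      define v' where "v' = v(k := (1 / sqrt g) *\<^sub>R c)"
      have "(\<Sum>k\<in>insert k S. v' k $ i * v' k $ j) = c$i * c$j / g + (\<Sum>k\<in>S. v k $ i * v k $ j)" for i j
      proof -
        have "(\<Sum>k\<in>S. v' k $ i * v' k $ j) = (\<Sum>k\<in>S. v k $ i * v k $ j)"
          using insert.hyps by (intro sum.cong) (auto simp: v'_def)
        moreover have "v' k $ i * v' k $ j = c$i * c$j / g"
          using gpos by (simp add: v'_def field_simps real_sqrt_mult[symmetric])
        ultimately show ?thesis using insert.hyps by simp
      qed
      moreover have "G$i$j = c$i * c$j / g + (\<Sum>k\<in>S. v k $ i * v k $ j)" for i j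
        using v[rule_format, of i j] unfolding G'e by linarith
      ultimately have "\<forall>i j. G$i$j = (\<Sum>k\<in>insert k S. v' k $ i * v' k $ j)"
        by simp
      then show ?thesis by blast
    qed
  qed
qed

lemma psd_gram:
  fixes G :: "real^'n^'n"
  assumes "pos_semidef G"
  shows "\<exists>v :: 'n \<Rightarrow> real^'n. \<forall>i j. G$i$j = (\<Sum>k\<in>UNIV. v k $ i * v k $ j)"
  using psd_gram_aux[of "UNIV::'n set"] assms unfolding pos_semidef_def by simp

lemma trace_psd_mult:
  fixes F G :: "real^'n^'n"
  assumes "pos_semidef F" "pos_semidef G"
  shows "0 \<le> trace (F ** G)"
proof -
  obtain v :: "'n \<Rightarrow> real^'n" where v: "\<forall>i j. G$i$j = (\<Sum>k\<in>UNIV. v k $ i * v k $ j)" using psd_gram[OF assms(2)] by blast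
  have pF: "\<And>x. 0 \<le> x \<bullet> (F *v x)" using assms(1) unfolding pos_semidef_def by blast
  have "trace (F ** G) = (\<Sum>i\<in>UNIV. \<Sum>j\<in>UNIV. F$i$j * G$j$i)"
    by (simp add: trace_def mm_comp)
  also have "\<dots> = (\<Sum>i\<in>UNIV. \<Sum>j\<in>UNIV. \<Sum>k\<in>UNIV. F$i$j * (v k $ j * v k $ i))"
    by (simp only: v[rule_format] sum_distrib_left)
  also have "\<dots> = (\<Sum>i\<in>UNIV. \<Sum>k\<in>UNIV. \<Sum>j\<in>UNIV. F$i$j * (v k $ j * v k $ i))"
    by (rule sum.cong[OF refl], rule sum.swap)
  also have "\<dots> = (\<Sum>k\<in>UNIV. \<Sum>i\<in>UNIV. \<Sum>j\<in>UNIV. F$i$j * (v k $ j * v k $ i))"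
    by (rule sum.swap)
  also have "\<dots> = (\<Sum>k\<in>UNIV. v k \<bullet> (F *v v k))"
    unfolding quad_entries by (intro sum.cong refl) (simp add: mult.commute mult.left_commute)
  also have "\<dots> \<ge> 0" using pF by (simp add: sum_nonneg)
  finally show ?thesis .
qed

lemma mv_transpose_inner: "x \<bullet> (transpose (E::real^'n^'n) *v y) = (E *v x) \<bullet> y"
  by (metis dot_lmul_matrix inner_commute transpose_matrix_vector)

lemma psd_congr:
  fixes E M :: "real^'n^'n"
  assumes "pos_semidef M"
  shows "pos_semidef (transpose E ** M ** E)"
proof -
  have s: "sym_mat M" using assms unfolding pos_semidef_def by blast
  have "transpose (transpose E ** M ** E) = transpose E ** M ** E"
    using s by (simp add: matrix_transpose_mul sym_mat_def matrix_mul_assoc)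
  moreover have "x \<bullet> ((transpose E ** M ** E) *v x) = (E *v x) \<bullet> (M *v (E *v x))" for x
  proof -
    have w: "x \<bullet> (w v* E) = (E *v x) \<bullet> w" for w by (metis dot_lmul_matrix inner_commute)
    show ?thesis by (simp add: matrix_vector_mul_assoc[symmetric] w)
  qed
  ultimately show ?thesis using assms unfolding pos_semidef_def sym_mat_def by simp
qed

lemma pos_semidef_id: "pos_semidef (mat 1 :: real^'n^'n)"
  unfolding pos_semidef_def sym_mat_def by simp

lemma trace_psd: "pos_semidef (P::real^'n^'n) \<Longrightarrow> 0 \<le> trace P"
  using trace_psd_mult[OF _ pos_semidef_id, of P] by simp

lemma bnd_psd_lo: "bnd a b (X::real^'n^'n) \<Longrightarrow> pos_semidef (X - a *\<^sub>R mat 1)"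
  using bnd_loewner[of a X b] unfolding loewner_le_def by blast

lemma bnd_psd_hi: "bnd a b (X::real^'n^'n) \<Longrightarrow> pos_semidef (b *\<^sub>R mat 1 - X)"
  using bnd_loewner[of a X b] unfolding loewner_le_def by blast

lemma bnd_psd: "bnd a b (X::real^'n^'n) \<Longrightarrow> 0 \<le> a \<Longrightarrow> pos_semidef X"
  unfolding bnd_def pos_semidef_def
  by (meson order_trans mult_nonneg_nonneg zero_le_power2)

lemma absmid: "a * n \<le> q \<Longrightarrow> q \<le> b * n \<Longrightarrow> \<bar>q - (a * n + b * n) / 2\<bar> \<le> (b * n - a * n) / (2::real)"
proof -
  assume h: "a * n \<le> q" "q \<le> b * n"
  have "q - (a * n + b * n) / 2 \<le> (b * n - a * n) / 2" using h by (simp add: field_simps)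
  moreover have "- (q - (a * n + b * n) / 2) \<le> (b * n - a * n) / 2" using h by (simp add: field_simps)
  ultimately show ?thesis by (rule abs_le_iff[THEN iffD2, OF conjI])
qed

lemma inv_bnd:
  fixes X :: "real^'n^'n"
  assumes bX: "bnd a b X" and a: "0 < a" and ab: "a \<le> b"
  shows "bnd (1/b) (1/a) (matrix_inv X)"
proof -
  have inv: "invertible X" using bnd_invertible[OF bX a] .
  have sX: "sym_mat X" using bX unfolding bnd_def by blast
  have lo: "\<And>x. a * (norm x)\<^sup>2 \<le> x \<bullet> (X *v x)" and hi: "\<And>x. x \<bullet> (X *v x) \<le> b * (norm x)\<^sup>2"
    using bX unfolding bnd_def by auto
  define c where "c = (a + b) / 2"
  define r where "r = (b - a) / 2"
  have nT: "norm (X *v y - c *\<^sub>R y) \<le> r * norm y" for y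
  proof -
    have "norm ((\<lambda>v. (X - c *\<^sub>R mat 1) *v v) y) \<le> r * norm y"
    proof (rule selfadj_norm)
      show "linear (\<lambda>v. (X - c *\<^sub>R mat 1) *v v)" by simp
      show "((X - c *\<^sub>R mat 1) *v u) \<bullet> w = u \<bullet> ((X - c *\<^sub>R mat 1) *v w)" for u w
        using sym_adj sX sym_sub_mat1 by blast
      show "\<bar>u \<bullet> ((X - c *\<^sub>R mat 1) *v u)\<bar> \<le> r * (norm u)\<^sup>2" for u
      proof -
        have e: "u \<bullet> ((X - c *\<^sub>R mat 1) *v u) = u \<bullet> (X *v u) - c * (norm u)\<^sup>2"
          by (simp add: mv_sub_mat1 inner_diff_right power2_norm_eq_inner)
        have cn: "c * (norm u)\<^sup>2 = (a * (norm u)\<^sup>2 + b * (norm u)\<^sup>2) / 2"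
          and rn: "r * (norm u)\<^sup>2 = (b * (norm u)\<^sup>2 - a * (norm u)\<^sup>2) / 2"
          by (simp_all add: c_def r_def algebra_simps)
        show ?thesis unfolding e cn rn by (rule absmid[OF lo[of u] hi[of u]])
      qed
    qed
    then show ?thesis by (simp add: mv_sub_mat1)
  qed
  have main: "(1/b) * (norm z)\<^sup>2 \<le> z \<bullet> (matrix_inv X *v z) \<and> z \<bullet> (matrix_inv X *v z) \<le> (1/a) * (norm z)\<^sup>2" for z
  proof -
    define y where "y = matrix_inv X *v z"
    have zy: "z = X *v y" using matrix_inv_props[OF inv] by (simp add: y_def matrix_vector_mul_assoc)
    define q where "q = y \<bullet> (X *v y)"
    have iy: "matrix_inv X *v (X *v y) = y" by (simp add: matrix_vector_mul_assoc matrix_inv_props[OF inv])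
    have zq: "z \<bullet> (matrix_inv X *v z) = q" by (simp add: q_def zy iy inner_commute)
    have q1: "a * (norm y)\<^sup>2 \<le> q" "q \<le> b * (norm y)\<^sup>2" using lo hi q_def by auto
    have cs: "q \<le> norm y * norm (X *v y)" unfolding q_def by (rule norm_cauchy_schwarz)
    have up: "a * q \<le> (norm (X *v y))\<^sup>2"
    proof -
      have "a * (norm y)\<^sup>2 \<le> norm y * norm (X *v y)" using q1(1) cs by linarith
      then have ay: "a * norm y \<le> norm (X *v y)"
        by (cases "norm y = 0") (auto simp: power2_eq_square mult.assoc[symmetric] mult_le_cancel_right)
      have "a * q \<le> a * (norm y * norm (X *v y))" using cs a by simp
      also have "\<dots> = (a * norm y) * norm (X *v y)" by simp
      also have "\<dots> \<le> norm (X *v y) * norm (X *v y)" using ay by (simp add: mult_right_mono)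
      finally show ?thesis by (simp add: power2_eq_square)
    qed
    have low: "(norm (X *v y))\<^sup>2 \<le> b * q"
    proof -
      have "(norm (X *v y - c *\<^sub>R y))\<^sup>2 \<le> (r * norm y)\<^sup>2"
        using nT[of y] by (simp add: power_mono)
      moreover have "(norm (X *v y - c *\<^sub>R y))\<^sup>2 = (norm (X *v y))\<^sup>2 - 2 * c * q + c^2 * (norm y)\<^sup>2"
        unfolding power2_norm_eq_inner q_def
        by (simp add: inner_diff_left inner_diff_right inner_commute[of "X *v y" y] power2_eq_square algebra_simps)
      ultimately have "(norm (X *v y))\<^sup>2 \<le> 2 * c * q - (c^2 - r^2) * (norm y)\<^sup>2"
        by (simp add: power_mult_distrib algebra_simps)
      moreover have "c^2 - r^2 = a * b" unfolding c_def r_def by (simp add: power2_eq_square field_simps)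
      moreover have "a * q \<le> a * b * (norm y)\<^sup>2" using q1(2) a by (simp add: mult.assoc)
      ultimately show ?thesis by (simp add: c_def algebra_simps)
    qed
    have bpos: "b > 0" using a ab by simp
    show ?thesis
    proof
      show "(1/b) * (norm z)\<^sup>2 \<le> z \<bullet> (matrix_inv X *v z)"
        using low bpos by (simp add: zq zy[symmetric] field_simps mult.commute)
      show "z \<bullet> (matrix_inv X *v z) \<le> (1/a) * (norm z)\<^sup>2"
        using up a by (simp add: zq zy[symmetric] field_simps mult.commute)
    qed
  qed
  show ?thesis unfolding bnd_def using main matrix_inv_sym[OF inv sX] by blast
qed

lemma norm_sq_trace: "(norm (E::real^'n^'n))\<^sup>2 = trace (transpose E ** E)"
  by (simp add: power2_norm_eq_inner inner_trace)

lemma range_AEB: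
  fixes A B E :: "real^'n^'n"
  assumes bA: "bnd p q A" and bB: "bnd p q B" and p: "0 \<le> p"
  shows "p^2 * (norm E)\<^sup>2 \<le> E \<bullet> (A ** E ** B) \<and> E \<bullet> (A ** E ** B) \<le> q^2 * (norm E)\<^sup>2"
proof -
  have pq: "p \<le> q"
  proof -
    have "p * (norm (axis undefined 1 :: real^'n))\<^sup>2 \<le> q * (norm (axis undefined 1 :: real^'n))\<^sup>2"
      using bA unfolding bnd_def by (meson order_trans)
    then show ?thesis by simp
  qed
  have q: "0 \<le> q" using p pq by simp
  define F where "F = transpose E ** A ** E"
  have pF: "pos_semidef F" unfolding F_def by (rule psd_congr[OF bnd_psd[OF bA p]])
  have e1: "E \<bullet> (A ** E ** B) = trace (F ** B)"
    by (simp add: inner_trace F_def matrix_mul_assoc)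
  have e2: "(norm E)\<^sup>2 = trace (transpose E ** E)" by (rule norm_sq_trace)
  have t1: "0 \<le> trace (F ** (B - p *\<^sub>R mat 1))" by (rule trace_psd_mult[OF pF bnd_psd_lo[OF bB]])
  have t2: "0 \<le> trace (transpose E ** (A - p *\<^sub>R mat 1) ** E)" by (rule trace_psd[OF psd_congr[OF bnd_psd_lo[OF bA]]])
  have t3: "0 \<le> trace (F ** (q *\<^sub>R mat 1 - B))" by (rule trace_psd_mult[OF pF bnd_psd_hi[OF bB]])
  have t4: "0 \<le> trace (transpose E ** (q *\<^sub>R mat 1 - A) ** E)" by (rule trace_psd[OF psd_congr[OF bnd_psd_hi[OF bA]]])
  have f1: "trace (F ** (B - p *\<^sub>R mat 1)) = trace (F ** B) - p * trace F"
    by (simp add: mat_sub_ldistrib mat_scale_r trace_diff trace_scale)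
  have f3: "trace (F ** (q *\<^sub>R mat 1 - B)) = q * trace F - trace (F ** B)"
    by (simp add: mat_sub_ldistrib mat_scale_r trace_diff trace_scale)
  have f2: "trace (transpose E ** (A - p *\<^sub>R mat 1) ** E) = trace F - p * trace (transpose E ** E)"
    by (simp add: F_def mat_sub_ldistrib mat_sub_rdistrib mat_scale_r mat_scale_l trace_diff trace_scale)
  have f4: "trace (transpose E ** (q *\<^sub>R mat 1 - A) ** E) = q * trace (transpose E ** E) - trace F"
    by (simp add: F_def mat_sub_ldistrib mat_sub_rdistrib mat_scale_r mat_scale_l trace_diff trace_scale)
  have "trace (F ** B) - p^2 * trace (transpose E ** E) = trace (F ** (B - p *\<^sub>R mat 1)) + p * trace (transpose E ** (A - p *\<^sub>R mat 1) ** E)"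
    unfolding f1 f2 by (simp add: power2_eq_square algebra_simps)
  moreover have "0 \<le> p * trace (transpose E ** (A - p *\<^sub>R mat 1) ** E)" using p t2 by simp
  ultimately have lo: "p^2 * trace (transpose E ** E) \<le> trace (F ** B)" using t1 by linarith
  have "q^2 * trace (transpose E ** E) - trace (F ** B) = trace (F ** (q *\<^sub>R mat 1 - B)) + q * trace (transpose E ** (q *\<^sub>R mat 1 - A) ** E)"
    unfolding f3 f4 by (simp add: power2_eq_square algebra_simps)
  moreover have "0 \<le> q * trace (transpose E ** (q *\<^sub>R mat 1 - A) ** E)" using q t4 by simp
  ultimately have hi: "trace (F ** B) \<le> q^2 * trace (transpose E ** E)" using t3 by linarith
  show ?thesis using lo hi e1 e2 by simp
qed

lemma lin_AEB: "linear (\<lambda>E::real^'n^'n. A ** E ** B - s *\<^sub>R E)"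
  by (rule linearI) (simp_all add: matrix_add_ldistrib mat_add_rdistrib mat_scale_r mat_scale_l algebra_simps)

lemma adj_AEB:
  fixes A B E F :: "real^'n^'n"
  assumes "sym_mat A" "sym_mat B"
  shows "(A ** E ** B - s *\<^sub>R E) \<bullet> F = E \<bullet> (A ** F ** B - s *\<^sub>R F)"
proof -
  have tA: "transpose A = A" and tB: "transpose B = B" using assms by (auto simp: sym_mat_def)
  have "(A ** E ** B) \<bullet> F = trace (B ** (transpose E ** A ** F))"
    by (simp add: inner_trace matrix_transpose_mul tA tB matrix_mul_assoc)
  also have "\<dots> = trace ((transpose E ** A ** F) ** B)" by (rule trace_mul_sym)
  also have "\<dots> = E \<bullet> (A ** F ** B)" by (simp add: inner_trace matrix_mul_assoc)
  finally show ?thesis by (simp add: inner_diff_left inner_diff_right)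
qed

lemma lip_phi:
  fixes X Y :: "real^'n^'n"
  assumes bX: "bnd a b X" and bY: "bnd a b Y" and a: "0 < a" and ab: "a \<le> b" and z: "0 < \<zeta>"
  shows "norm ((X + \<zeta> *\<^sub>R matrix_inv X) - (Y + \<zeta> *\<^sub>R matrix_inv Y))
           \<le> max \<bar>1 - \<zeta> / a^2\<bar> \<bar>1 - \<zeta> / b^2\<bar> * norm (X - Y)"
proof -
  define A where "A = matrix_inv X"
  define B where "B = matrix_inv Y"
  define p where "p = 1 / b"
  define q where "q = 1 / a"
  define s where "s = 1 / \<zeta>"
  define \<rho> where "\<rho> = max \<bar>p^2 - s\<bar> \<bar>q^2 - s\<bar>"
  have bA: "bnd p q A" unfolding A_def p_def q_def by (rule inv_bnd[OF bX a ab])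
  have bB: "bnd p q B" unfolding B_def p_def q_def by (rule inv_bnd[OF bY a ab])
  have p0: "0 \<le> p" using a ab by (simp add: p_def)
  have sA: "sym_mat A" and sB: "sym_mat B" using bA bB by (auto simp: bnd_def)
  have iX: "invertible X" and iY: "invertible Y" using bnd_invertible bX bY a by auto
  have AX: "A ** X = mat 1" using matrix_inv_props(2)[OF iX] by (simp add: A_def)
  have YB: "Y ** B = mat 1" using matrix_inv_props(1)[OF iY] by (simp add: B_def)
  define D where "D = X - Y"
  have ADB: "A ** D ** B = B - A"
  proof -
    have "A ** D ** B = (A ** X) ** B - A ** (Y ** B)"
      by (simp add: D_def mat_sub_ldistrib mat_sub_rdistrib matrix_mul_assoc)
    then show ?thesis using AX YB by simp
  qed
  define T where "T = (\<lambda>E::real^'n^'n. A ** E ** B - s *\<^sub>R E)"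
  have eq: "(X + \<zeta> *\<^sub>R A) - (Y + \<zeta> *\<^sub>R B) = - (\<zeta> *\<^sub>R T D)"
    unfolding T_def ADB using z by (simp add: s_def D_def algebra_simps)
  have nT: "norm (T D) \<le> \<rho> * norm D"
  proof (rule selfadj_norm)
    show "linear T" unfolding T_def by (rule lin_AEB)
    show "T u \<bullet> w = u \<bullet> T w" for u w unfolding T_def by (rule adj_AEB[OF sA sB])
    show "\<bar>u \<bullet> T u\<bar> \<le> \<rho> * (norm u)\<^sup>2" for u
    proof -
      have r: "p^2 * (norm u)\<^sup>2 \<le> u \<bullet> (A ** u ** B) \<and> u \<bullet> (A ** u ** B) \<le> q^2 * (norm u)\<^sup>2"
        by (rule range_AEB[OF bA bB p0])
      have e: "u \<bullet> T u = u \<bullet> (A ** u ** B) - s * (norm u)\<^sup>2"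
        by (simp add: T_def inner_diff_right power2_norm_eq_inner)
      have "(p^2 - s) * (norm u)\<^sup>2 \<le> u \<bullet> T u" using r e by (simp add: algebra_simps)
      moreover have "u \<bullet> T u \<le> (q^2 - s) * (norm u)\<^sup>2" using r e by (simp add: algebra_simps)
      moreover have "\<bar>p^2 - s\<bar> \<le> \<rho>" "\<bar>q^2 - s\<bar> \<le> \<rho>" by (auto simp: \<rho>_def)
      moreover have "- \<rho> * (norm u)\<^sup>2 \<le> (p^2 - s) * (norm u)\<^sup>2"
        using \<open>\<bar>p^2 - s\<bar> \<le> \<rho>\<close> by (intro mult_right_mono) auto
      moreover have "(q^2 - s) * (norm u)\<^sup>2 \<le> \<rho> * (norm u)\<^sup>2"
        using \<open>\<bar>q^2 - s\<bar> \<le> \<rho>\<close> by (intro mult_right_mono) auto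
      ultimately have "- (\<rho> * (norm u)\<^sup>2) \<le> u \<bullet> T u" "u \<bullet> T u \<le> \<rho> * (norm u)\<^sup>2"
        by auto
      then show ?thesis by (metis abs_le_iff minus_le_iff)
    qed
  qed
  have "norm ((X + \<zeta> *\<^sub>R A) - (Y + \<zeta> *\<^sub>R B)) = \<zeta> * norm (T D)"
    unfolding eq using z by simp
  also have "\<dots> \<le> \<zeta> * (\<rho> * norm D)" using nT z by simp
  finally have fin: "norm ((X + \<zeta> *\<^sub>R A) - (Y + \<zeta> *\<^sub>R B)) \<le> (\<zeta> * \<rho>) * norm D"
    by (simp add: mult.assoc)
  have zr: "\<zeta> * \<rho> = max \<bar>1 - \<zeta> / a^2\<bar> \<bar>1 - \<zeta> / b^2\<bar>"
  proof -
    have "\<zeta> * \<bar>p^2 - s\<bar> = \<bar>1 - \<zeta> / b^2\<bar>"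
      using z by (simp add: p_def s_def abs_mult[symmetric] power_divide field_simps abs_minus_commute)
    moreover have "\<zeta> * \<bar>q^2 - s\<bar> = \<bar>1 - \<zeta> / a^2\<bar>"
      using z by (simp add: q_def s_def abs_mult[symmetric] power_divide field_simps abs_minus_commute)
    ultimately show ?thesis using z by (simp add: \<rho>_def max_mult_distrib_left max.commute)
  qed
  show ?thesis using fin unfolding zr A_def B_def D_def .
qed

lemma clip1: "\<bar>min (max x (-l)) l - min (max y (-l)) l\<bar> \<le> \<bar>x - y\<bar>" for x y l :: real
  by (auto simp: min_def max_def abs_le_iff)

lemma clip_lip: "norm (clip l U - clip l (V::real^'n^'n)) \<le> norm (U - V)"
proof -
  have "frob_norm (clip l U - clip l V) \<le> frob_norm (U - V)"
    unfolding frob_norm_def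
  proof (rule real_sqrt_le_mono, rule sum_mono, rule sum_mono)
    fix i j
    have "\<bar>(clip l U - clip l V)$i$j\<bar> \<le> \<bar>(U - V)$i$j\<bar>"
      using clip1[of "U$i$j" l "V$i$j"] by (simp add: clip_def)
    then show "((clip l U - clip l V)$i$j)\<^sup>2 \<le> ((U - V)$i$j)\<^sup>2"
      by (metis abs_ge_zero power2_abs power_mono)
  qed
  then show ?thesis by (simp add: frob_norm_eq)
qed

lemma step_bound:
  fixes G Gs S Ss :: "real^'n^'n"
  assumes bG: "bnd a b G" and bGs: "bnd a b Gs" and a: "0 < a" and ab: "a \<le> b" and z: "0 < \<zeta>"
    and fx: "opt_step lam \<zeta> Ss Gs = Gs"
  shows "norm (opt_step lam \<zeta> S G - Gs)
     \<le> max \<bar>1 - \<zeta> / a^2\<bar> \<bar>1 - \<zeta> / b^2\<bar> * norm (G - Gs) + 2 * norm (S - Ss)"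
proof -
  define U where "U = G - S + \<zeta> *\<^sub>R matrix_inv G"
  define V where "V = Gs - Ss + \<zeta> *\<^sub>R matrix_inv Gs"
  have "opt_step lam \<zeta> S G - Gs = opt_step lam \<zeta> S G - opt_step lam \<zeta> Ss Gs" using fx by simp
  also have "\<dots> = (clip lam U - clip lam V) + (S - Ss)"
    by (simp add: opt_step_def U_def V_def)
  finally have e: "opt_step lam \<zeta> S G - Gs = (clip lam U - clip lam V) + (S - Ss)" .
  have uv: "U - V = ((G + \<zeta> *\<^sub>R matrix_inv G) - (Gs + \<zeta> *\<^sub>R matrix_inv Gs)) - (S - Ss)"
    by (simp add: U_def V_def algebra_simps)
  have "norm (opt_step lam \<zeta> S G - Gs) \<le> norm (clip lam U - clip lam V) + norm (S - Ss)"
    unfolding e by (rule norm_triangle_ineq)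
  also have "\<dots> \<le> norm (U - V) + norm (S - Ss)" using clip_lip by simp
  also have "norm (U - V) \<le> norm ((G + \<zeta> *\<^sub>R matrix_inv G) - (Gs + \<zeta> *\<^sub>R matrix_inv Gs)) + norm (S - Ss)"
    unfolding uv by (rule norm_triangle_ineq4)
  also have "norm ((G + \<zeta> *\<^sub>R matrix_inv G) - (Gs + \<zeta> *\<^sub>R matrix_inv Gs))
      \<le> max \<bar>1 - \<zeta> / a^2\<bar> \<bar>1 - \<zeta> / b^2\<bar> * norm (G - Gs)"
    by (rule lip_phi[OF bG bGs a ab z])
  finally show ?thesis by simp
qed

lemma lim_lin:
  fixes A C \<epsilon> :: real
  assumes e: "0 < \<epsilon>" and h: "\<And>t. 0 < t \<Longrightarrow> t < \<epsilon> \<Longrightarrow> 0 \<le> t * A + C * t^2"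
  shows "0 \<le> A"
proof (rule ccontr)
  assume "\<not> 0 \<le> A"
  then have An: "A < 0" by simp
  define C' where "C' = \<bar>C\<bar> + 1"
  have C'p: "C' > 0" by (simp add: C'_def)
  define t where "t = min (\<epsilon> / 2) (- A / (2 * C'))"
  have "A / (2 * C') < 0" using An C'p by (simp add: divide_neg_pos)
  then have tp: "0 < t" using e by (simp add: t_def)
  have te: "t < \<epsilon>" using e by (simp add: t_def)
  have t2: "t \<le> - A / (2 * C')" by (simp add: t_def)
  have "C' * t \<le> - A / 2" using t2 C'p by (simp add: field_simps)
  have "t * A + C * t^2 \<le> t * A + C' * t^2"
    using tp by (simp add: C'_def power2_eq_square mult_right_mono)
  also have "\<dots> = t * (A + C' * t)" by (simp add: power2_eq_square algebra_simps)
  also have "\<dots> \<le> t * (A / 2)" using tp \<open>C' * t \<le> - A / 2\<close> by (intro mult_left_mono) auto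
  also have "\<dots> < 0" using tp An by (simp add: mult_pos_neg)
  finally show False using h[OF tp te] by simp
qed

lemma kkt_1d:
  fixes \<kappa> \<gamma> c s \<omega> lam \<delta> :: real
  assumes kp: "0 < \<kappa>" and dp: "0 < \<delta>"
    and opt: "\<And>t. \<bar>t\<bar> < \<delta> \<Longrightarrow> 0 \<le> - ln (1 + \<kappa> * \<gamma> * t + c * t^2) + \<kappa> * t * s + \<kappa> * lam * (\<bar>\<omega> + t\<bar> - \<bar>\<omega>\<bar>)"
  shows "(\<omega> > 0 \<longrightarrow> \<gamma> - s = lam) \<and> (\<omega> < 0 \<longrightarrow> \<gamma> - s = - lam) \<and> (\<omega> = 0 \<longrightarrow> \<bar>\<gamma> - s\<bar> \<le> lam)"
proof -
  define K where "K = \<kappa> * \<bar>\<gamma>\<bar> + \<bar>c\<bar>"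
  have K0: "0 \<le> K" using kp by (simp add: K_def)
  define t1 where "t1 = min (\<delta> / 2) (min 1 (1 / (2 * K + 1)))"
  have t1p: "0 < t1" using dp K0 by (simp add: t1_def)
  define C where "C = (\<bar>c\<bar> + 2 * K^2) / \<kappa>"
  have key: "0 \<le> t * (s - \<gamma>) + lam * (\<bar>\<omega> + t\<bar> - \<bar>\<omega>\<bar>) + C * t^2" if tt: "\<bar>t\<bar> < t1" for t
  proof -
    define u where "u = \<kappa> * \<gamma> * t + c * t^2"
    have t1': "\<bar>t\<bar> \<le> 1" "\<bar>t\<bar> < \<delta>" "\<bar>t\<bar> \<le> 1 / (2 * K + 1)" using tt dp by (auto simp: t1_def)
    have ut: "\<bar>u\<bar> \<le> K * \<bar>t\<bar>"
    proof -
      have "\<bar>u\<bar> \<le> \<kappa> * \<bar>\<gamma>\<bar> * \<bar>t\<bar> + \<bar>c\<bar> * t^2"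
        unfolding u_def using kp by (simp add: abs_mult power2_eq_square abs_triangle_ineq[THEN order_trans])
      also have "\<bar>c\<bar> * t^2 \<le> \<bar>c\<bar> * \<bar>t\<bar>"
      proof -
        have "t^2 \<le> \<bar>t\<bar>" using t1'(1) by (simp add: power2_eq_square abs_mult[symmetric])
          (metis abs_ge_zero abs_mult_self_eq mult_left_le)
        then show ?thesis by (simp add: mult_left_mono)
      qed
      finally show ?thesis by (simp add: K_def algebra_simps)
    qed
    have uh: "\<bar>u\<bar> \<le> 1/2"
    proof -
      have "K * \<bar>t\<bar> \<le> K * (1 / (2 * K + 1))" by (rule mult_left_mono[OF t1'(3) K0])
      also have "\<dots> \<le> 1/2" using K0 by (simp add: field_simps)
      finally show ?thesis using ut by simp
    qed
    have lnb: "ln (1 + u) \<ge> u - 2 * u^2" using abs_ln_one_plus_x_minus_x_bound[OF uh] by (simp add: abs_le_iff)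
    have u2: "u^2 \<le> K^2 * t^2"
    proof -
      have "u^2 = \<bar>u\<bar>^2" by simp
      also have "\<dots> \<le> (K * \<bar>t\<bar>)^2" by (rule power_mono[OF ut abs_ge_zero])
      finally show ?thesis by (simp add: power_mult_distrib)
    qed
    have "0 \<le> - ln (1 + u) + \<kappa> * t * s + \<kappa> * lam * (\<bar>\<omega> + t\<bar> - \<bar>\<omega>\<bar>)"
      using opt[OF t1'(2)] by (simp add: u_def add.assoc)
    also have "\<dots> \<le> - u + 2 * u^2 + \<kappa> * t * s + \<kappa> * lam * (\<bar>\<omega> + t\<bar> - \<bar>\<omega>\<bar>)" using lnb by simp
    also have "- u + 2 * u^2 \<le> - \<kappa> * \<gamma> * t + (\<bar>c\<bar> + 2 * K^2) * t^2"
    proof -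
      have "- c * t^2 \<le> \<bar>c\<bar> * t^2" by (rule mult_right_mono) auto
      then show ?thesis using u2 by (simp add: u_def algebra_simps)
    qed
    finally have f0: "0 \<le> - \<kappa> * \<gamma> * t + (\<bar>c\<bar> + 2 * K^2) * t^2 + \<kappa> * t * s + \<kappa> * lam * (\<bar>\<omega> + t\<bar> - \<bar>\<omega>\<bar>)"
      by simp
    have kC: "\<kappa> * C = \<bar>c\<bar> + 2 * K^2" using kp by (simp add: C_def)
    have "\<kappa> * (t * (s - \<gamma>) + lam * (\<bar>\<omega> + t\<bar> - \<bar>\<omega>\<bar>) + C * t^2)
        = - \<kappa> * \<gamma> * t + (\<kappa> * C) * t^2 + \<kappa> * t * s + \<kappa> * lam * (\<bar>\<omega> + t\<bar> - \<bar>\<omega>\<bar>)"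
      by (simp add: algebra_simps)
    then have "0 \<le> \<kappa> * (t * (s - \<gamma>) + lam * (\<bar>\<omega> + t\<bar> - \<bar>\<omega>\<bar>) + C * t^2)"
      using f0 kC by simp
    then show ?thesis using kp by (simp add: zero_le_mult_iff)
  qed
  have pos: "0 \<le> t * (s - \<gamma>) + lam * (\<bar>\<omega> + t\<bar> - \<bar>\<omega>\<bar>) + C * t^2" if "0 < t" "t < t1" for t
    using key that by simp
  have neg: "0 \<le> - t * (s - \<gamma>) + lam * (\<bar>\<omega> - t\<bar> - \<bar>\<omega>\<bar>) + C * t^2" if "0 < t" "t < t1" for t
    using key[of "-t"] that by simp
  show ?thesis
  proof (intro conjI impI)
    assume w: "\<omega> > 0"
    define e where "e = min t1 \<omega>"
    have ep: "0 < e" using w t1p by (simp add: e_def)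
    have "0 \<le> s - \<gamma> + lam"
    proof (rule lim_lin[OF ep])
      fix t assume "0 < t" "t < e"
      then have "\<bar>\<omega> + t\<bar> - \<bar>\<omega>\<bar> = t" "t < t1" using w by (auto simp: e_def)
      then show "0 \<le> t * (s - \<gamma> + lam) + C * t^2" using pos[of t] \<open>0 < t\<close> by (simp add: algebra_simps)
    qed
    moreover have "0 \<le> - (s - \<gamma> + lam)"
    proof (rule lim_lin[OF ep])
      fix t assume "0 < t" "t < e"
      then have "\<bar>\<omega> - t\<bar> - \<bar>\<omega>\<bar> = - t" "t < t1" using w by (auto simp: e_def)
      then show "0 \<le> t * (- (s - \<gamma> + lam)) + C * t^2" using neg[of t] \<open>0 < t\<close> by (simp add: algebra_simps)
    qed
    ultimately show "\<gamma> - s = lam" by simp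
  next
    assume w: "\<omega> < 0"
    define e where "e = min t1 (- \<omega>)"
    have ep: "0 < e" using w t1p by (simp add: e_def)
    have "0 \<le> s - \<gamma> - lam"
    proof (rule lim_lin[OF ep])
      fix t assume "0 < t" "t < e"
      then have "\<bar>\<omega> + t\<bar> - \<bar>\<omega>\<bar> = - t" "t < t1" using w by (auto simp: e_def)
      then show "0 \<le> t * (s - \<gamma> - lam) + C * t^2" using pos[of t] \<open>0 < t\<close> by (simp add: algebra_simps)
    qed
    moreover have "0 \<le> - (s - \<gamma> - lam)"
    proof (rule lim_lin[OF ep])
      fix t assume "0 < t" "t < e"
      then have "\<bar>\<omega> - t\<bar> - \<bar>\<omega>\<bar> = t" "t < t1" using w by (auto simp: e_def)
      then show "0 \<le> t * (- (s - \<gamma> - lam)) + C * t^2" using neg[of t] \<open>0 < t\<close> by (simp add: algebra_simps)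
    qed
    ultimately show "\<gamma> - s = - lam" by simp
  next
    assume w: "\<omega> = 0"
    have "0 \<le> s - \<gamma> + lam"
    proof (rule lim_lin[OF t1p])
      fix t assume "0 < t" "t < t1"
      then show "0 \<le> t * (s - \<gamma> + lam) + C * t^2" using pos[of t] w by (simp add: algebra_simps)
    qed
    moreover have "0 \<le> - (s - \<gamma>) + lam"
    proof (rule lim_lin[OF t1p])
      fix t assume "0 < t" "t < t1"
      then show "0 \<le> t * (- (s - \<gamma>) + lam) + C * t^2" using neg[of t] w by (simp add: algebra_simps)
    qed
    ultimately show "\<bar>\<gamma> - s\<bar> \<le> lam" by (simp add: abs_le_iff)
  qed
qed

lemma pd_invertible: "pos_def (M::real^'n^'n) \<Longrightarrow> invertible M"
proof -
  assume pd: "pos_def M"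
  have "\<forall>x. M *v x = 0 \<longrightarrow> x = 0"
  proof (intro allI impI)
    fix x assume "M *v x = 0"
    then show "x = 0" using pd unfolding pos_def_def by (metis inner_zero_right less_irrefl)
  qed
  then show ?thesis using matrix_left_invertible_ker invertible_left_inverse by blast
qed

lemma det_pos:
  fixes M :: "real^'n^'n"
  assumes pd: "pos_def M"
  shows "0 < det M"
proof (rule ccontr)
  assume "\<not> 0 < det M"
  then have d: "det M \<le> 0" by simp
  define f where "f = (\<lambda>s::real. det (s *\<^sub>R M + (1 - s) *\<^sub>R (mat 1 :: real^'n^'n)))"
  have cont: "continuous_on {0..1} f"
    unfolding f_def det_def by (intro continuous_intros)
  have f0: "f 0 = 1" by (simp add: f_def)
  have f1: "f 1 = det M" by (simp add: f_def)
  obtain s where s: "0 \<le> s" "s \<le> 1" "f s = 0"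
    using IVT2'[of f 1 0 0] cont f0 f1 d by auto
  have "pos_def (s *\<^sub>R M + (1 - s) *\<^sub>R (mat 1 :: real^'n^'n))"
    unfolding pos_def_def
  proof (intro conjI allI impI)
    show "sym_mat (s *\<^sub>R M + (1 - s) *\<^sub>R mat 1)"
      using pd unfolding pos_def_def sym_mat_def by (simp add: transpose_add transpose_scalar)
    fix x :: "real^'n" assume x: "x \<noteq> 0"
    have "(s *\<^sub>R M + (1 - s) *\<^sub>R mat 1) *v x = s *\<^sub>R (M *v x) + (1 - s) *\<^sub>R x"
      by (simp add: matrix_vector_mult_add_rdistrib mv_scale_mat1 scaleR_matrix_vector_assoc)
    then have "x \<bullet> ((s *\<^sub>R M + (1 - s) *\<^sub>R mat 1) *v x) = s * (x \<bullet> (M *v x)) + (1 - s) * (x \<bullet> x)"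
      by (simp add: inner_add_right)
    moreover have "0 < x \<bullet> (M *v x)" using pd x unfolding pos_def_def by blast
    moreover have "0 < x \<bullet> x" using x by simp
    ultimately show "0 < x \<bullet> ((s *\<^sub>R M + (1 - s) *\<^sub>R mat 1) *v x)"
    proof -
      assume e: "x \<bullet> ((s *\<^sub>R M + (1 - s) *\<^sub>R mat 1) *v x) = s * (x \<bullet> (M *v x)) + (1 - s) * (x \<bullet> x)"
        and A: "0 < x \<bullet> (M *v x)" and B: "0 < x \<bullet> x"
      define m where "m = min (x \<bullet> (M *v x)) (x \<bullet> x)"
      have "s * m + (1 - s) * m \<le> s * (x \<bullet> (M *v x)) + (1 - s) * (x \<bullet> x)"
        using s(1,2) by (intro add_mono mult_left_mono) (auto simp: m_def)
      moreover have "0 < m" using A B by (simp add: m_def)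
      ultimately show ?thesis using e by (simp add: algebra_simps)
    qed
  qed
  then have "det (s *\<^sub>R M + (1 - s) *\<^sub>R (mat 1 :: real^'n^'n)) \<noteq> 0"
    using pd_invertible invertible_det_nz by blast
  then show False using s(3) by (simp add: f_def)
qed

definition rowupd :: "real^'n^'n \<Rightarrow> 'n \<Rightarrow> real^'n \<Rightarrow> real^'n^'n" where
  "rowupd M k v = (\<chi> r. if r = k then v else M$r)"

lemma rowupd_nth: "rowupd M k v $ r = (if r = k then v else M$r)"
  by (simp add: rowupd_def)

lemma det_rowupd_add:
  "det (rowupd M k (M$k + t *\<^sub>R v)) = det M + t * det (rowupd M k v)"
proof -
  have "det (\<chi> r. if r = k then M$k + t *s v else M$r) = det (\<chi> r. if r = k then M$k else M$r) + det (\<chi> r. if r = k then t *s v else M$r)"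
    by (rule det_row_add)
  moreover have "(\<chi> r. if r = k then M$k else M$r) = M" by (simp add: vec_eq_iff)
  moreover have "det (\<chi> r. if r = k then t *s v else M$r) = t * det (\<chi> r. if r = k then v else M$r)"
    by (rule det_row_mul)
  moreover have sc: "t *\<^sub>R v = t *s v" by (simp add: vec_eq_iff)
  ultimately show ?thesis unfolding rowupd_def sc by simp
qed

lemma det_rowupd_axis:
  fixes M :: "real^'n^'n"
  assumes "sym_mat M" "invertible M"
  shows "det (rowupd M k (axis l 1)) = det M * (matrix_inv M)$k$l"
proof -
  define x where "x = matrix_inv M *v axis l 1"
  have Mx: "M *v x = axis l 1" using matrix_inv_props(1)[OF assms(2)] by (simp add: x_def matrix_vector_mul_assoc)
  have T: "transpose (rowupd M k (axis l 1)) = (\<chi> i j. if j = k then (M *v x)$i else M$i$j)"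
  proof -
    have "transpose (rowupd M k (axis l 1)) $ i $ j = (\<chi> i j. if j = k then (M *v x)$i else M$i$j) $ i $ j" for i j
    proof -
      have "M$j$i = M$i$j" by (rule sym_entry[OF assms(1)])
      then show ?thesis unfolding Mx by (simp add: transpose_def rowupd_def)
    qed
    then show ?thesis by (simp add: vec_eq_iff)
  qed
  have "det (rowupd M k (axis l 1)) = det (transpose (rowupd M k (axis l 1)))" by (rule det_transpose[symmetric])
  also have "\<dots> = x$k * det M" unfolding T by (rule cramer_lemma)
  finally have "det (rowupd M k (axis l 1)) = x$k * det M" .
  moreover have "x$k = (matrix_inv M)$k$l" by (simp add: x_def matrix_vector_mult_basis column_def)
  ultimately show ?thesis by simp
qed

definition Hm :: "'n \<Rightarrow> 'n \<Rightarrow> real^'n^'n" where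
  "Hm i j = (if i = j then outer (axis i 1) (axis i 1) else outer (axis i 1) (axis j 1) + outer (axis j 1) (axis i 1))"

lemma outer_axis: "outer (axis i 1) (axis j 1) $ r $ c = (if r = i \<and> c = j then 1 else (0::real))"
  by (simp add: outer_def axis_def)

lemma Hm_nth: "Hm i j $ r $ c = (if i = j then (if r = i \<and> c = i then 1 else 0)
    else (if r = i \<and> c = j then 1 else 0) + (if r = j \<and> c = i then 1 else 0))"
  by (simp add: Hm_def outer_axis)

lemma Hv: "Hm i j $ k $ l = (if k = i \<and> l = j then 1 else if k = j \<and> l = i then 1 else (0::real))"
  by (cases "i = j"; cases "k = i"; cases "l = j"; cases "k = j"; cases "l = i") (simp_all add: Hm_nth)

lemma Hm_sym: "Hm i j $ r $ c = Hm i j $ c $ r"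
  unfolding Hv by (cases "r = i"; cases "c = j"; cases "r = j"; cases "c = i") simp_all

lemma quad_Hm: "\<bar>x \<bullet> (Hm i j *v x)\<bar> \<le> 2 * (norm x)\<^sup>2"
proof -
  have xi: "\<bar>x$i\<bar> \<le> norm x" and xj: "\<bar>x$j\<bar> \<le> norm x" by (rule component_le_norm_cart)+
  have pr: "\<bar>x$i * x$j\<bar> \<le> (norm x)\<^sup>2"
    unfolding abs_mult power2_eq_square by (rule mult_mono[OF xi xj]) auto
  have pr2: "\<bar>x$i * x$i\<bar> \<le> (norm x)\<^sup>2"
    unfolding abs_mult power2_eq_square by (rule mult_mono[OF xi xi]) auto
  have o: "x \<bullet> (outer (axis a 1) (axis b 1) *v x) = x$b * x$a" for a b
    by (simp add: outer_mv inner_axis inner_commute)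
  show ?thesis
  proof (cases "i = j")
    case True
    then have eq: "x \<bullet> (Hm i j *v x) = x$i * x$i" by (simp add: Hm_def o)
    show ?thesis unfolding eq using pr2 zero_le_power2[of "norm x"] by linarith
  next
    case False
    then have "x \<bullet> (Hm i j *v x) = 2 * (x$i * x$j)"
      by (simp add: Hm_def o matrix_vector_mult_add_rdistrib inner_add_right)
    then show ?thesis using pr by (simp add: abs_mult)
  qed
qed

lemma pd_pert:
  fixes \<Omega> :: "real^'n^'n"
  assumes sO: "sym_mat \<Omega>" and lo: "\<And>x. m * (norm x)\<^sup>2 \<le> x \<bullet> (\<Omega> *v x)" and t: "\<bar>t\<bar> < m / 2"
  shows "pos_def (\<Omega> + t *\<^sub>R Hm i j)"
  unfolding pos_def_def
proof (intro conjI allI impI)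
  have "transpose (\<Omega> + t *\<^sub>R Hm i j) $ r $ c = (\<Omega> + t *\<^sub>R Hm i j) $ r $ c" for r c
    by (simp add: transpose_def sym_entry[OF sO, of c r] Hm_sym[of i j c r])
  then show "sym_mat (\<Omega> + t *\<^sub>R Hm i j)"
    unfolding sym_mat_def by (simp add: vec_eq_iff)
  fix x :: "real^'n" assume x: "x \<noteq> 0"
  have e: "x \<bullet> ((\<Omega> + t *\<^sub>R Hm i j) *v x) = x \<bullet> (\<Omega> *v x) + t * (x \<bullet> (Hm i j *v x))"
    by (simp add: matrix_vector_mult_add_rdistrib scaleR_matrix_vector_assoc[symmetric] inner_add_right)
  have "\<bar>t * (x \<bullet> (Hm i j *v x))\<bar> \<le> \<bar>t\<bar> * (2 * (norm x)\<^sup>2)"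
    unfolding abs_mult by (rule mult_left_mono[OF quad_Hm]) simp
  also have "\<dots> < (m / 2) * (2 * (norm x)\<^sup>2)"
    using t x by (intro mult_strict_right_mono) auto
  finally have "\<bar>t * (x \<bullet> (Hm i j *v x))\<bar> < m * (norm x)\<^sup>2" by simp
  then show "0 < x \<bullet> ((\<Omega> + t *\<^sub>R Hm i j) *v x)" unfolding e using lo[of x] by linarith
qed

lemma det_pert:
  fixes \<Omega> :: "real^'n^'n"
  assumes sO: "sym_mat \<Omega>" and iO: "invertible \<Omega>"
  shows "\<exists>c. \<forall>t. det (\<Omega> + t *\<^sub>R Hm i j) = det \<Omega> * (1 + (if i = j then 1 else 2) * (matrix_inv \<Omega>)$i$j * t) + c * t^2"
proof -
  define \<Gamma> where "\<Gamma> = matrix_inv \<Omega>"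
  have sG: "\<Gamma>$j$i = \<Gamma>$i$j" using sym_entry[OF matrix_inv_sym[OF iO sO]] by (simp add: \<Gamma>_def)
  show ?thesis
  proof (cases "i = j")
    case True
    have "\<Omega> + t *\<^sub>R Hm i j = rowupd \<Omega> i (\<Omega>$i + t *\<^sub>R axis i 1)" for t
    proof -
      have "(\<Omega> + t *\<^sub>R Hm i j) $ r $ c = rowupd \<Omega> i (\<Omega>$i + t *\<^sub>R axis i 1) $ r $ c" for r c
        using True by (cases "r = i"; cases "c = i") (simp_all add: Hv rowupd_def axis_def)
      then show ?thesis by (simp add: vec_eq_iff)
    qed
    then have "det (\<Omega> + t *\<^sub>R Hm i j) = det \<Omega> * (1 + (if i = j then 1 else 2) * \<Gamma>$i$j * t) + 0 * t^2" for t
      using True by (simp add: det_rowupd_add det_rowupd_axis[OF sO iO] \<Gamma>_def algebra_simps)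
    then show ?thesis unfolding \<Gamma>_def by blast
  next
    case False
    define c where "c = det (rowupd (rowupd \<Omega> j (axis i 1)) i (axis j 1))"
    have "det (\<Omega> + t *\<^sub>R Hm i j) = det \<Omega> * (1 + (if i = j then 1 else 2) * \<Gamma>$i$j * t) + c * t^2" for t
    proof -
      define M1 where "M1 = rowupd \<Omega> i (\<Omega>$i + t *\<^sub>R axis j 1)"
      define M2 where "M2 = rowupd \<Omega> j (axis i 1)"
      have e1: "\<Omega> + t *\<^sub>R Hm i j = rowupd M1 j (M1$j + t *\<^sub>R axis i 1)"
      proof -
        have "(\<Omega> + t *\<^sub>R Hm i j) $ r $ c = rowupd M1 j (M1$j + t *\<^sub>R axis i 1) $ r $ c" for r c
          using False by (cases "r = i"; cases "r = j"; cases "c = i"; cases "c = j")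
             (simp_all add: Hv rowupd_def axis_def M1_def)
        then show ?thesis by (simp add: vec_eq_iff)
      qed
      have e2: "rowupd M1 j (axis i 1) = rowupd M2 i (M2$i + t *\<^sub>R axis j 1)"
      proof -
        have "rowupd M1 j (axis i 1) $ r = rowupd M2 i (M2$i + t *\<^sub>R axis j 1) $ r" for r
          using False by (cases "r = i"; cases "r = j") (simp_all add: rowupd_def M1_def M2_def)
        then show ?thesis by (simp add: vec_eq_iff)
      qed
      have "det (\<Omega> + t *\<^sub>R Hm i j) = det M1 + t * det (rowupd M1 j (axis i 1))"
        unfolding e1 by (rule det_rowupd_add)
      also have "det M1 = det \<Omega> + t * (det \<Omega> * \<Gamma>$i$j)"
        unfolding M1_def det_rowupd_add det_rowupd_axis[OF sO iO] \<Gamma>_def ..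
      also have "det (rowupd M1 j (axis i 1)) = det \<Omega> * \<Gamma>$j$i + t * c"
        unfolding e2 det_rowupd_add unfolding M2_def det_rowupd_axis[OF sO iO] \<Gamma>_def c_def ..
      finally show ?thesis using False sG by (simp add: power2_eq_square algebra_simps)
    qed
    then show ?thesis unfolding \<Gamma>_def by blast
  qed
qed

lemma trace_outer: "trace ((S::real^'n^'n) ** outer u w) = w \<bullet> (S *v u)"
  by (simp add: trace_def mm_comp outer_def inner_vec_def matrix_vector_mult_def sum_distrib_left algebra_simps)

lemma trace_Hm:
  assumes "sym_mat (S::real^'n^'n)"
  shows "trace (S ** Hm i j) = (if i = j then 1 else 2) * S$i$j"
proof -
  have "S$j$i = S$i$j" by (rule sym_entry[OF assms])
  then show ?thesis
    by (simp add: Hm_def trace_outer matrix_add_ldistrib trace_add axis_quad)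
qed

lemma sum_delta2: "(\<Sum>k\<in>UNIV. \<Sum>l\<in>UNIV. if k = (i::'n::finite) \<and> l = (j::'n) then d else 0) = (d::real)"
proof -
  have "(\<Sum>l\<in>UNIV. if k = i \<and> l = j then d else 0) = (if k = i then d else 0)" for k
    by (cases "k = i") (simp_all add: sum.delta sum.delta')
  then show ?thesis by (simp add: sum.delta sum.delta')
qed

lemma sum2_distrib: "(\<Sum>k\<in>UNIV. \<Sum>l\<in>UNIV. f k l + g k l) = (\<Sum>k\<in>UNIV. \<Sum>l\<in>UNIV. f k l) + (\<Sum>k\<in>UNIV. \<Sum>l\<in>(UNIV::'n::finite set). (g k l::real))"
  by (simp add: sum.distrib)

lemma abs_sum_pert:
  fixes \<Omega> :: "real^'n^'n"
  assumes sO: "sym_mat \<Omega>"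
  shows "(\<Sum>k\<in>UNIV. \<Sum>l\<in>UNIV. \<bar>(\<Omega> + t *\<^sub>R Hm i j)$k$l\<bar>)
       = (\<Sum>k\<in>UNIV. \<Sum>l\<in>UNIV. \<bar>\<Omega>$k$l\<bar>) + (if i = j then 1 else 2) * (\<bar>\<Omega>$i$j + t\<bar> - \<bar>\<Omega>$i$j\<bar>)"
proof -
  define d where "d = \<bar>\<Omega>$i$j + t\<bar> - \<bar>\<Omega>$i$j\<bar>"
  have sj: "\<Omega>$j$i = \<Omega>$i$j" by (rule sym_entry[OF sO])
  have ent: "\<bar>(\<Omega> + t *\<^sub>R Hm i j)$k$l\<bar> = \<bar>\<Omega>$k$l\<bar> + ((if k = i \<and> l = j then d else 0) + (if k = j \<and> l = i then (if i = j then 0 else d) else 0))" for k l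
    using sj by (cases "k = i"; cases "l = j"; cases "k = j"; cases "l = i") (simp_all add: Hv d_def)
  have "(\<Sum>k\<in>UNIV. \<Sum>l\<in>UNIV. \<bar>(\<Omega> + t *\<^sub>R Hm i j)$k$l\<bar>)
      = (\<Sum>k\<in>UNIV. \<Sum>l\<in>UNIV. \<bar>\<Omega>$k$l\<bar>) + (d + (if i = j then 0 else d))"
    unfolding ent sum2_distrib sum_delta2 ..
  also have "\<dots> = (\<Sum>k\<in>UNIV. \<Sum>l\<in>UNIV. \<bar>\<Omega>$k$l\<bar>) + (if i = j then 1 else 2) * d"
    by simp
  finally show ?thesis unfolding d_def .
qed

lemma kkt_entry:
  fixes S \<Omega> :: "real^'n^'n"
  assumes pdO: "pos_def \<Omega>" and lo: "\<And>x. m * (norm x)\<^sup>2 \<le> x \<bullet> (\<Omega> *v x)" and m: "0 < m"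
    and sS: "sym_mat S"
    and opt: "\<And>\<Omega>'. pos_def \<Omega>' \<Longrightarrow> glasso_obj S lam \<Omega> \<le> glasso_obj S lam \<Omega>'"
  shows "(\<Omega>$i$j > 0 \<longrightarrow> (matrix_inv \<Omega>)$i$j - S$i$j = lam)
       \<and> (\<Omega>$i$j < 0 \<longrightarrow> (matrix_inv \<Omega>)$i$j - S$i$j = - lam)
       \<and> (\<Omega>$i$j = 0 \<longrightarrow> \<bar>(matrix_inv \<Omega>)$i$j - S$i$j\<bar> \<le> lam)"
proof -
  have sO: "sym_mat \<Omega>" using pdO by (simp add: pos_def_def)
  have iO: "invertible \<Omega>" by (rule pd_invertible[OF pdO])
  define D where "D = det \<Omega>"
  have Dp: "0 < D" unfolding D_def by (rule det_pos[OF pdO])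
  define \<kappa> where "\<kappa> = (if i = j then 1 else 2::real)"
  have kp: "0 < \<kappa>" by (simp add: \<kappa>_def)
  define \<gamma> where "\<gamma> = (matrix_inv \<Omega>)$i$j"
  obtain c where dc: "\<And>t. det (\<Omega> + t *\<^sub>R Hm i j) = det \<Omega> * (1 + (if i = j then 1 else 2) * (matrix_inv \<Omega>)$i$j * t) + c * t^2"
    using det_pert[OF sO iO, of i j] by blast
  define c' where "c' = c / D"
  define \<omega> where "\<omega> = \<Omega>$i$j"
  define s where "s = S$i$j"
  have main: "0 \<le> - ln (1 + \<kappa> * \<gamma> * t + c' * t^2) + \<kappa> * t * s + \<kappa> * lam * (\<bar>\<omega> + t\<bar> - \<bar>\<omega>\<bar>)"
    if t: "\<bar>t\<bar> < m / 2" for t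
  proof -
    define u where "u = 1 + \<kappa> * \<gamma> * t + c' * t^2"
    have pd': "pos_def (\<Omega> + t *\<^sub>R Hm i j)" by (rule pd_pert[OF sO lo t])
    have du: "det (\<Omega> + t *\<^sub>R Hm i j) = D * u"
      using dc[of t] Dp by (simp add: u_def c'_def D_def \<kappa>_def \<gamma>_def field_simps)
    have "0 < D * u" using det_pos[OF pd'] du by simp
    then have up: "0 < u" using Dp by (simp add: zero_less_mult_iff)
    have tr: "trace (S ** (\<Omega> + t *\<^sub>R Hm i j)) = trace (S ** \<Omega>) + t * (\<kappa> * s)"
      by (simp add: matrix_add_ldistrib mat_scale_r trace_add trace_scale trace_Hm[OF sS] \<kappa>_def s_def)
    have ab: "(\<Sum>k\<in>UNIV. \<Sum>l\<in>UNIV. \<bar>(\<Omega> + t *\<^sub>R Hm i j)$k$l\<bar>)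
       = (\<Sum>k\<in>UNIV. \<Sum>l\<in>UNIV. \<bar>\<Omega>$k$l\<bar>) + \<kappa> * (\<bar>\<omega> + t\<bar> - \<bar>\<omega>\<bar>)"
      unfolding abs_sum_pert[OF sO] \<kappa>_def \<omega>_def ..
    have ln: "ln (D * u) = ln D + ln u" using Dp up by (simp add: ln_mult)
    have "glasso_obj S lam \<Omega> \<le> glasso_obj S lam (\<Omega> + t *\<^sub>R Hm i j)" by (rule opt[OF pd'])
    then have "- ln D + trace (S ** \<Omega>) + lam * (\<Sum>k\<in>UNIV. \<Sum>l\<in>UNIV. \<bar>\<Omega>$k$l\<bar>)
        \<le> - ln (D * u) + (trace (S ** \<Omega>) + t * (\<kappa> * s)) + lam * ((\<Sum>k\<in>UNIV. \<Sum>l\<in>UNIV. \<bar>\<Omega>$k$l\<bar>) + \<kappa> * (\<bar>\<omega> + t\<bar> - \<bar>\<omega>\<bar>))"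
      unfolding glasso_obj_def du tr ab by (simp add: D_def)
    then have "0 \<le> - ln u + t * (\<kappa> * s) + lam * (\<kappa> * (\<bar>\<omega> + t\<bar> - \<bar>\<omega>\<bar>))"
      unfolding ln by (simp add: algebra_simps)
    then show ?thesis by (simp add: u_def algebra_simps)
  qed
  have "(\<omega> > 0 \<longrightarrow> \<gamma> - s = lam) \<and> (\<omega> < 0 \<longrightarrow> \<gamma> - s = - lam) \<and> (\<omega> = 0 \<longrightarrow> \<bar>\<gamma> - s\<bar> \<le> lam)"
    by (rule kkt_1d[where \<delta>="m/2", OF kp]) (use m main in auto)
  then show ?thesis unfolding \<omega>_def \<gamma>_def s_def .
qed

lemma fixed_point:
  fixes S \<Omega> :: "real^'n^'n"
  assumes pdO: "pos_def \<Omega>" and sS: "sym_mat S"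
    and opt: "\<And>\<Omega>'. pos_def \<Omega>' \<Longrightarrow> glasso_obj S lam \<Omega> \<le> glasso_obj S lam \<Omega>'"
    and bG: "bnd a b (matrix_inv \<Omega>)" and a: "0 < a" and ab: "a \<le> b" and lam: "0 < lam" and z: "0 < \<zeta>"
  shows "opt_step lam \<zeta> S (matrix_inv \<Omega>) = matrix_inv \<Omega>"
proof -
  have iO: "invertible \<Omega>" by (rule pd_invertible[OF pdO])
  have ii: "matrix_inv (matrix_inv \<Omega>) = \<Omega>" by (rule matrix_inv_inv[OF iO])
  have bO: "bnd (1/b) (1/a) \<Omega>" using inv_bnd[OF bG a ab] ii by simp
  have lo: "\<And>x. (1/b) * (norm x)\<^sup>2 \<le> x \<bullet> (\<Omega> *v x)" using bO unfolding bnd_def by blast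
  have m: "0 < 1/b" using a ab by simp
  define \<Gamma> where "\<Gamma> = matrix_inv \<Omega>"
  have ent: "min (max (\<Gamma>$i$j - S$i$j + \<zeta> * \<Omega>$i$j) (- lam)) lam + S$i$j = \<Gamma>$i$j" for i j
  proof -
    have K: "(\<Omega>$i$j > 0 \<longrightarrow> \<Gamma>$i$j - S$i$j = lam) \<and> (\<Omega>$i$j < 0 \<longrightarrow> \<Gamma>$i$j - S$i$j = - lam)
       \<and> (\<Omega>$i$j = 0 \<longrightarrow> \<bar>\<Gamma>$i$j - S$i$j\<bar> \<le> lam)"
      unfolding \<Gamma>_def by (rule kkt_entry[OF pdO lo m sS opt])
    consider "\<Omega>$i$j > 0" | "\<Omega>$i$j < 0" | "\<Omega>$i$j = 0" by linarith
    then show ?thesis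
    proof cases
      case 1
      then have "\<Gamma>$i$j - S$i$j = lam" "0 < \<zeta> * \<Omega>$i$j" using K z by auto
      then show ?thesis using lam by (simp add: min_def max_def)
    next
      case 2
      then have "\<Gamma>$i$j - S$i$j = - lam" "\<zeta> * \<Omega>$i$j < 0" using K z by (auto simp: mult_pos_neg)
      then show ?thesis using lam by (simp add: min_def max_def)
    next
      case 3
      then have "\<bar>\<Gamma>$i$j - S$i$j\<bar> \<le> lam" using K by auto
      then show ?thesis using 3 by (simp add: min_def max_def abs_le_iff)
    qed
  qed
  have iG: "matrix_inv \<Gamma> = \<Omega>" using ii by (simp add: \<Gamma>_def)
  have "opt_step lam \<zeta> S \<Gamma> = \<Gamma>"
    unfolding opt_step_def iG using ent by (simp add: vec_eq_iff clip_def)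
  then show ?thesis by (simp add: \<Gamma>_def)
qed

lemma inner_iter:
  fixes e :: "nat \<Rightarrow> real"
  assumes b: "0 \<le> \<beta>" and st: "\<And>k. 1 \<le> k \<Longrightarrow> k \<le> K \<Longrightarrow> e k \<le> \<beta> * e (k - 1) + 2 * \<delta>"
  shows "k \<le> K \<Longrightarrow> e k \<le> \<beta>^k * e 0 + 2 * (\<Sum>m=1..k. \<beta>^(k - m)) * \<delta>"
proof (induction k)
  case 0
  then show ?case by simp
next
  case (Suc k)
  have IH: "e k \<le> \<beta>^k * e 0 + 2 * (\<Sum>m=1..k. \<beta>^(k - m)) * \<delta>" using Suc by simp
  have "e (Suc k) \<le> \<beta> * e k + 2 * \<delta>" using st[of "Suc k"] Suc.prems by simp
  also have "\<dots> \<le> \<beta> * (\<beta>^k * e 0 + 2 * (\<Sum>m=1..k. \<beta>^(k - m)) * \<delta>) + 2 * \<delta>"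
    using IH b by (simp add: mult_left_mono)
  also have "\<dots> = \<beta>^(Suc k) * e 0 + 2 * (\<Sum>m=1..Suc k. \<beta>^(Suc k - m)) * \<delta>"
  proof -
    have "(\<Sum>m=1..Suc k. \<beta>^(Suc k - m)) = (\<Sum>m=1..k. \<beta>^(Suc k - m)) + 1" by simp
    moreover have "(\<Sum>m=1..k. \<beta>^(Suc k - m)) = \<beta> * (\<Sum>m=1..k. \<beta>^(k - m))"
      unfolding sum_distrib_left by (rule sum.cong) (auto simp: Suc_diff_le)
    ultimately show ?thesis by (simp add: algebra_simps)
  qed
  finally show ?case .
qed

lemma outer_iter:
  fixes E g :: "nat \<Rightarrow> real"
  assumes B: "0 \<le> B" and st: "\<And>d. E (Suc d) \<le> B * E d + 2 * P * g (t0 + Suc d)"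
  shows "E d \<le> B^d * E 0 + 2 * P * (\<Sum>l=t0+1..t0+d. B^(t0 + d - l) * g l)"
proof (induction d)
  case 0
  then show ?case by simp
next
  case (Suc d)
  have "E (Suc d) \<le> B * E d + 2 * P * g (t0 + Suc d)" by (rule st)
  also have "\<dots> \<le> B * (B^d * E 0 + 2 * P * (\<Sum>l=t0+1..t0+d. B^(t0 + d - l) * g l)) + 2 * P * g (t0 + Suc d)"
    using Suc B by (simp add: mult_left_mono)
  also have "\<dots> = B^(Suc d) * E 0 + 2 * P * (\<Sum>l=t0+1..t0+Suc d. B^(t0 + Suc d - l) * g l)"
  proof -
    have "(\<Sum>l=t0+1..t0+Suc d. B^(t0 + Suc d - l) * g l) = (\<Sum>l=t0+1..t0+d. B^(t0 + Suc d - l) * g l) + g (t0 + Suc d)"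
      by simp
    moreover have "(\<Sum>l=t0+1..t0+d. B^(t0 + Suc d - l) * g l) = B * (\<Sum>l=t0+1..t0+d. B^(t0 + d - l) * g l)"
      unfolding sum_distrib_left by (rule sum.cong) (auto simp: Suc_diff_le)
    ultimately show ?thesis by (simp add: algebra_simps)
  qed
  finally show ?case .
qed

theorem theorem1:
  fixes M :: "'w measure"
    and X :: "nat \<Rightarrow> 'w \<Rightarrow> real^'p::finite"
    and Sstar :: "'p mat"
    and adj :: "'n::finite \<Rightarrow> 'n \<Rightarrow> bool"
    and meas :: "'n \<Rightarrow> 'p \<Rightarrow> bool"
    and W K t0 t :: nat
    and lam zeta a b :: real
    and \<Omega>star :: "'p mat"
    and \<omega> :: 'w
    and i :: 'n
  assumes prob: "prob_space M"
    and Sstar_pd: "pos_def Sstar"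
    and X_rv: "\<And>s. s \<ge> 1 \<Longrightarrow> X s \<in> borel_measurable M"
    and X_indep: "prob_space.indep_vars M (\<lambda>_. borel) X {1..}"
    and X_gauss: "\<And>s. s \<ge> 1 \<Longrightarrow> distributed M lborel (X s) (\<lambda>x. ennreal (gauss_density Sstar x))"
    and graph: "conn_undirected_graph adj"
    and W_pos: "W \<ge> 1" and K_pos: "K \<ge> 1" and t0_pos: "t0 \<ge> 1"
    and lam_pos: "lam > 0"
    and Omega_pd: "pos_def \<Omega>star"
    and Omega_min: "\<And>\<Omega>. pos_def \<Omega> \<Longrightarrow> glasso_obj Sstar lam \<Omega>star \<le> glasso_obj Sstar lam \<Omega>"
    and ab: "0 < a" "a < b"
    and zeta_pos: "zeta > 0"
    and \<omega>_in: "\<omega> \<in> space M"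
    and iter_bounds: "\<And>j s k. s \<ge> t0 \<Longrightarrow> k \<in> {1..K} \<Longrightarrow>
           loewner_le (a *\<^sub>R mat 1)
             (Gam lam zeta K t0 (\<lambda>l. SW adj meas W (\<lambda>l. X l \<omega>) l j) s k)
         \<and> loewner_le (Gam lam zeta K t0 (\<lambda>l. SW adj meas W (\<lambda>l. X l \<omega>) l j) s k)
             (b *\<^sub>R mat 1)"
    and Gstar_bounds: "loewner_le (a *\<^sub>R mat 1) (matrix_inv \<Omega>star)"
                      "loewner_le (matrix_inv \<Omega>star) (b *\<^sub>R mat 1)"
    and t_ge: "t \<ge> t0"
  shows "let \<beta> = max \<bar>1 - zeta / a^2\<bar> \<bar>1 - zeta / b^2\<bar>;
             Sl = (\<lambda>l. SW adj meas W (\<lambda>l. X l \<omega>) l i);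
             \<Gamma>star = matrix_inv \<Omega>star
         in frob_norm (Gam lam zeta K t0 Sl t K - \<Gamma>star)
            \<le> \<beta> ^ (K * (t - t0)) * frob_norm (Gam lam zeta K t0 Sl t0 K - \<Gamma>star)
              + 2 * (\<Sum>m=1..K. \<beta> ^ (K - m) *
                       (\<Sum>l=t0+1..t. \<beta> ^ (K * (t - l)) * frob_norm (Sl l - Sstar)))"
proof -
  define \<beta> where "\<beta> = max \<bar>1 - zeta / a^2\<bar> \<bar>1 - zeta / b^2\<bar>"
  define Sl where "Sl = (\<lambda>l. SW adj meas W (\<lambda>l. X l \<omega>) l i)"
  define \<Gamma>s where "\<Gamma>s = matrix_inv \<Omega>star"
  define G where "G = Gam lam zeta K t0 Sl"
  have b0: "0 \<le> \<beta>" by (simp add: \<beta>_def)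
  have a0: "0 < a" and ab': "a \<le> b" using ab by auto
  have bGs: "bnd a b \<Gamma>s" unfolding \<Gamma>s_def using Gstar_bounds bnd_loewner by blast
  have sS: "sym_mat Sstar" using Sstar_pd by (simp add: pos_def_def)
  have fp: "opt_step lam zeta Sstar \<Gamma>s = \<Gamma>s"
    unfolding \<Gamma>s_def
    by (rule fixed_point[OF Omega_pd sS _ bGs[unfolded \<Gamma>s_def] a0 ab' lam_pos zeta_pos]) (fact Omega_min)
  have bnds: "bnd a b (G s k)" if "t0 \<le> s" "1 \<le> k" "k \<le> K" for s k
    using iter_bounds[of s k i] that bnd_loewner unfolding G_def Sl_def by auto
  have GK: "G (t0 + d) K = GamK lam zeta K t0 Sl d" for d
  proof (cases d)
    case 0
    then show ?thesis by (simp add: G_def Gam_def)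
  next
    case (Suc d')
    then show ?thesis by (simp add: G_def Gam_def)
  qed
  have G0: "G (t0 + Suc d) 0 = GamK lam zeta K t0 Sl d" for d
    by (simp add: G_def Gam_def)
  have Gstep': "G (t0 + Suc d) (Suc k) = opt_step lam zeta (Sl (t0 + Suc d)) (G (t0 + Suc d) k)" for d k
    by (simp add: G_def Gam_def)
  have Gstep: "G (t0 + Suc d) k = opt_step lam zeta (Sl (t0 + Suc d)) (G (t0 + Suc d) (k - 1))" if "1 \<le> k" for d k
    using Gstep'[of d "k - 1"] that by simp
  define E where "E d = norm (GamK lam zeta K t0 Sl d - \<Gamma>s)" for d
  define g where "g l = norm (Sl l - Sstar)" for l
  define P where "P = (\<Sum>m=1..K. \<beta>^(K - m))"
  have Estep: "E (Suc d) \<le> \<beta>^K * E d + 2 * P * g (t0 + Suc d)" for d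
  proof -
    define e where "e k = norm (G (t0 + Suc d) k - \<Gamma>s)" for k
    have st: "e k \<le> \<beta> * e (k - 1) + 2 * g (t0 + Suc d)" if "1 \<le> k" "k \<le> K" for k
    proof -
      have bprev: "bnd a b (G (t0 + Suc d) (k - 1))"
      proof (cases "k = 1")
        case True
        have "G (t0 + Suc d) 0 = G (t0 + d) K" using G0[of d] GK[of d] by simp
        then have "G (t0 + Suc d) (k - 1) = G (t0 + d) K" using True by simp
        then show ?thesis using bnds[of "t0 + d" K] K_pos by simp
      next
        case False
        then show ?thesis using bnds[of "t0 + Suc d" "k - 1"] that by simp
      qed
      show ?thesis
        unfolding e_def g_def \<beta>_def Gstep[OF that(1)]
        by (rule step_bound[OF bprev bGs a0 ab' zeta_pos fp])
    qed
    have "e K \<le> \<beta>^K * e 0 + 2 * (\<Sum>m=1..K. \<beta>^(K - m)) * g (t0 + Suc d)"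
      by (rule inner_iter[where e=e and \<delta>="g (t0 + Suc d)" and K=K, OF b0 st]) auto
    moreover have "e K = E (Suc d)" using GK[of "Suc d"] by (simp add: e_def E_def)
    moreover have "e 0 = E d" using G0[of d] by (simp add: e_def E_def)
    ultimately show ?thesis by (simp add: P_def)
  qed
  have main: "E d \<le> (\<beta>^K)^d * E 0 + 2 * P * (\<Sum>l=t0+1..t0+d. (\<beta>^K)^(t0 + d - l) * g l)" for d
    by (rule outer_iter[OF _ Estep]) (simp add: b0)
  define d where "d = t - t0"
  have td: "t = t0 + d" using t_ge by (simp add: d_def)
  have lhs: "G t K = GamK lam zeta K t0 Sl d" using GK[of d] td by simp
  have e0: "G t0 K = GamK lam zeta K t0 Sl 0" using GK[of 0] by simp
  have sumeq: "(\<Sum>l=t0+1..t0+d. (\<beta>^K)^(t0 + d - l) * g l) = (\<Sum>l=t0+1..t. \<beta>^(K * (t - l)) * g l)"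
    using td by (simp add: power_mult)
  have "norm (G t K - \<Gamma>s) \<le> \<beta>^(K * (t - t0)) * norm (G t0 K - \<Gamma>s)
      + 2 * (\<Sum>m=1..K. \<beta>^(K - m) * (\<Sum>l=t0+1..t. \<beta>^(K * (t - l)) * g l))"
  proof -
    have "norm (G t K - \<Gamma>s) = E d" by (simp add: lhs E_def)
    also have "\<dots> \<le> (\<beta>^K)^d * E 0 + 2 * P * (\<Sum>l=t0+1..t0+d. (\<beta>^K)^(t0 + d - l) * g l)" by (rule main)
    also have "\<dots> = \<beta>^(K * (t - t0)) * norm (G t0 K - \<Gamma>s)
      + 2 * (\<Sum>m=1..K. \<beta>^(K - m) * (\<Sum>l=t0+1..t. \<beta>^(K * (t - l)) * g l))"
      unfolding sumeq by (simp add: E_def e0 P_def sum_distrib_right power_mult d_def)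
    finally show ?thesis .
  qed
  then show ?thesis
    unfolding Let_def \<beta>_def[symmetric] Sl_def[symmetric] \<Gamma>s_def[symmetric] G_def[symmetric]
    by (simp add: frob_norm_eq g_def)
qed

end
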